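(* $\mathcal{H}(\mathcal{G})$ is an autonomous category such that for every $g \in \mathcal{G}$, with $g \in \mathcal{G}(i,j)$ (so that $g\bar g = 1_i$): $$H_g^\ast = H_g,\qquad \Lambda_{H_g} = \Lambda_g = \Delta_g \circ L_g,\qquad \lambda_{H_g} = \lambda_g = l_{i} \circ m_{g,\bar g}\circ(\mathrm{id}_g \diamond S_g).$$
   Context: Let $\mathcal{G}$ be a groupoid (morphisms written multiplicatively from left to right, $\bar g$ the inverse of $g$, $1_i$ the identity of the object $i$, $\mathcal{G}(i,j)$ the morphisms from $i$ to $j$). In a braided monoidal category with product $\diamond$ and unit object $\mathbf{1}$, a Hopf $\mathcal{G}$-algebra is a family of objects $H=\{H_g\}_{g\in\mathcal{G}}$ with comultiplications $\Delta_g: H_g\to H_g\diamond H_g$, counits $\epsilon_g:H_g\to\mathbf{1}$, multiplications $m_{g,h}:H_g\diamond H_h\to H_{gh}$ (for composable $g,h$), units $\eta_i:\mathbf{1}\to H_{1_i}$, antipodes $S_g:H_g\to H_{\bar g}$ with inverses $\bar S_g$, satisfying the usual coassociativity, counit, associativity, unit, bialgebra compatibility ($\Delta_{gh}\circ m_{g,h}=(m_{g,h}\diamond m_{g,h})\circ(\mathrm{id}_g\diamond\gamma_{g,h}\diamond\mathrm{id}_h)\circ(\Delta_g\diamond\Delta_h)$, etc.) and antipode axioms ($m_{\bar g,g}\circ(S_g\diamond\mathrm{id}_g)\circ\Delta_g=\eta_j\circ\epsilon_g$, $m_{g,\bar g}\circ(\mathrm{id}_g\diamond S_g)\circ\Delta_g=\eta_i\circ\epsilon_g$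 for $g\in\mathcal{G}(i,j)$). A left cointegral is a family $l=\{l_i:H_{1_i}\to\mathbf{1}\}$ with $(\mathrm{id}_{1_i}\diamond l_i)\circ\Delta_{1_i}=\eta_i\circ l_i$; a right integral is a family $L=\{L_g:\mathbf{1}\to H_g\}$ with $m_{g,h}\circ(L_g\diamond\mathrm{id}_h)=L_{gh}\circ\epsilon_h$. $\mathcal{H}(\mathcal{G})$ denotes the free braided monoidal category generated by a Hopf $\mathcal{G}$-algebra $H$ with a left cointegral $l$ and a right integral $L$ such that $l_i\circ L_{1_i}=\mathrm{id}_{\mathbf{1}}=l_i\circ S_{1_i}\circ L_{1_i}$ for every object $i$. Autonomous means every object $A$ has a right dual $(A^\ast,\Lambda_A:\mathbf{1}\to A^\ast\diamond A,\ \lambda_A:A\diamond A^\ast\to\mathbf{1})$ satisfying the two zig-zag (snake) identities; here $\Lambda_A,\lambda_A$ for general objects are defined inductively by $(A\diamond B)^\ast=B^\ast\diamond A^\ast$, $\Lambda_{A\diamond B}=(\mathrm{id}_{B^\ast}\diamond\Lambda_A\diamond\mathrm{id}_B)\circ\Lambda_B$, $\lambda_{A\diamond B}=\lambda_A\circ(\mathrm{id}_A\diamond\lambda_B\diamond\mathrm{id}_{A^\ast})$. *)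

theory Defs
  imports Main
begin

text \<open>A groupoid given by a set of objects, a set of morphisms, source, target,
  composition written from left to right (gcmp g h = gh for g in G(i,j), h in G(j,k)),
  inverse and identities.\<close>

record ('o, 'g) groupoid =
  gOb  :: "'o set"
  gMor :: "'g set"
  gsrc :: "'g \<Rightarrow> 'o"
  gtgt :: "'g \<Rightarrow> 'o"
  gcmp :: "'g \<Rightarrow> 'g \<Rightarrow> 'g"
  ginv :: "'g \<Rightarrow> 'g"
  gidn :: "'o \<Rightarrow> 'g"

definition is_groupoid :: "('o, 'g) groupoid \<Rightarrow> bool" where
  "is_groupoid G \<longleftrightarrow>
     (\<forall>i\<in>gOb G. gidn G i \<in> gMor G \<and> gsrc G (gidn G i) = i \<and> gtgt G (gidn G i) = i) \<and>
     (\<forall>g\<in>gMor G. gsrc G g \<in> gOb G \<and> gtgt G g \<in> gOb G) \<and>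
     (\<forall>g\<in>gMor G. \<forall>h\<in>gMor G. gtgt G g = gsrc G h \<longrightarrow>
         gcmp G g h \<in> gMor G \<and> gsrc G (gcmp G g h) = gsrc G g \<and> gtgt G (gcmp G g h) = gtgt G h) \<and>
     (\<forall>g\<in>gMor G. \<forall>h\<in>gMor G. \<forall>k\<in>gMor G. gtgt G g = gsrc G h \<longrightarrow> gtgt G h = gsrc G k \<longrightarrow>
         gcmp G (gcmp G g h) k = gcmp G g (gcmp G h k)) \<and>
     (\<forall>g\<in>gMor G. gcmp G (gidn G (gsrc G g)) g = g \<and> gcmp G g (gidn G (gtgt G g)) = g) \<and>
     (\<forall>g\<in>gMor G. ginv G g \<in> gMor G \<and> gsrc G (ginv G g) = gtgt G g \<and> gtgt G (ginv G g) = gsrc G g \<and>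
         gcmp G g (ginv G g) = gidn G (gsrc G g) \<and> gcmp G (ginv G g) g = gidn G (gtgt G g))"

section \<open>The free braided (strict) monoidal category H(G)\<close>

text \<open>Objects are words (lists) of generating objects H_g (g a morphism of G);
  the monoidal product is concatenation and the unit object is the empty word.
  Morphisms are well-typed terms modulo the least congruence generated by the axioms.\<close>

datatype ('o, 'g) hterm =
    HId "'g list"
  | HComp "('o, 'g) hterm" "('o, 'g) hterm"   \<comment> \<open>HComp f g = f \<circ> g (g first)\<close>
  | HTens "('o, 'g) hterm" "('o, 'g) hterm"
  | HBr "'g list" "'g list"
  | HBrI "'g list" "'g list"
  | HDelta 'g
  | HEps 'g
  | HMult 'g 'g
  | HUnit 'o
  | HS 'g
  | HSi 'g
  | Hcoint 'o                                \<comment> \<open>left cointegral l_i : H_{1_i} \<rightarrow> 1\<close>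
  | Hint 'g                                  \<comment> \<open>right integral L_g : 1 \<rightarrow> H_g\<close>

fun hdom :: "('o, 'g) groupoid \<Rightarrow> ('o, 'g) hterm \<Rightarrow> 'g list" where
  "hdom G (HId A) = A"
| "hdom G (HComp f g) = hdom G g"
| "hdom G (HTens f g) = hdom G f @ hdom G g"
| "hdom G (HBr A B) = A @ B"
| "hdom G (HBrI A B) = B @ A"
| "hdom G (HDelta g) = [g]"
| "hdom G (HEps g) = [g]"
| "hdom G (HMult g h) = [g, h]"
| "hdom G (HUnit i) = []"
| "hdom G (HS g) = [g]"
| "hdom G (HSi g) = [ginv G g]"
| "hdom G (Hcoint i) = [gidn G i]"
| "hdom G (Hint g) = []"

fun hcod :: "('o, 'g) groupoid \<Rightarrow> ('o, 'g) hterm \<Rightarrow> 'g list" where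
  "hcod G (HId A) = A"
| "hcod G (HComp f g) = hcod G f"
| "hcod G (HTens f g) = hcod G f @ hcod G g"
| "hcod G (HBr A B) = B @ A"
| "hcod G (HBrI A B) = A @ B"
| "hcod G (HDelta g) = [g, g]"
| "hcod G (HEps g) = []"
| "hcod G (HMult g h) = [gcmp G g h]"
| "hcod G (HUnit i) = [gidn G i]"
| "hcod G (HS g) = [ginv G g]"
| "hcod G (HSi g) = [g]"
| "hcod G (Hcoint i) = []"
| "hcod G (Hint g) = [g]"

fun hwt :: "('o, 'g) groupoid \<Rightarrow> ('o, 'g) hterm \<Rightarrow> bool" where
  "hwt G (HId A) = (set A \<subseteq> gMor G)"
| "hwt G (HComp f g) = (hwt G f \<and> hwt G g \<and> hcod G g = hdom G f)"
| "hwt G (HTens f g) = (hwt G f \<and> hwt G g)"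
| "hwt G (HBr A B) = (set A \<subseteq> gMor G \<and> set B \<subseteq> gMor G)"
| "hwt G (HBrI A B) = (set A \<subseteq> gMor G \<and> set B \<subseteq> gMor G)"
| "hwt G (HDelta g) = (g \<in> gMor G)"
| "hwt G (HEps g) = (g \<in> gMor G)"
| "hwt G (HMult g h) = (g \<in> gMor G \<and> h \<in> gMor G \<and> gtgt G g = gsrc G h)"
| "hwt G (HUnit i) = (i \<in> gOb G)"
| "hwt G (HS g) = (g \<in> gMor G)"
| "hwt G (HSi g) = (g \<in> gMor G)"
| "hwt G (Hcoint i) = (i \<in> gOb G)"
| "hwt G (Hint g) = (g \<in> gMor G)"

inductive heq :: "('o, 'g) groupoid \<Rightarrow> ('o, 'g) hterm \<Rightarrow> ('o, 'g) hterm \<Rightarrow> bool"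
  for G :: "('o, 'g) groupoid" where
  refl: "hwt G f \<Longrightarrow> heq G f f"
| sym: "heq G f g \<Longrightarrow> heq G g f"
| trans: "heq G f g \<Longrightarrow> heq G g h \<Longrightarrow> heq G f h"
| comp_cong: "heq G f f' \<Longrightarrow> heq G g g' \<Longrightarrow> hcod G g = hdom G f \<Longrightarrow>
     heq G (HComp f g) (HComp f' g')"
| tens_cong: "heq G f f' \<Longrightarrow> heq G g g' \<Longrightarrow> heq G (HTens f g) (HTens f' g')"
| id_left: "hwt G f \<Longrightarrow> heq G (HComp (HId (hcod G f)) f) f"
| id_right: "hwt G f \<Longrightarrow> heq G (HComp f (HId (hdom G f))) f"
| comp_assoc: "hwt G f \<Longrightarrow> hwt G g \<Longrightarrow> hwt G h \<Longrightarrow> hcod G h = hdom G g \<Longrightarrow> hcod G g = hdom G f \<Longrightarrow>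
     heq G (HComp (HComp f g) h) (HComp f (HComp g h))"
| tens_assoc: "hwt G f \<Longrightarrow> hwt G g \<Longrightarrow> hwt G h \<Longrightarrow>
     heq G (HTens (HTens f g) h) (HTens f (HTens g h))"
| tens_unit_left: "hwt G f \<Longrightarrow> heq G (HTens (HId []) f) f"
| tens_unit_right: "hwt G f \<Longrightarrow> heq G (HTens f (HId [])) f"
| tens_id: "set A \<subseteq> gMor G \<Longrightarrow> set B \<subseteq> gMor G \<Longrightarrow> heq G (HTens (HId A) (HId B)) (HId (A @ B))"
| interchange: "hwt G f \<Longrightarrow> hwt G g \<Longrightarrow> hwt G f' \<Longrightarrow> hwt G g' \<Longrightarrow>
     hcod G f' = hdom G f \<Longrightarrow> hcod G g' = hdom G g \<Longrightarrow>
     heq G (HComp (HTens f g) (HTens f' g')) (HTens (HComp f f') (HComp g g'))"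
| br_natural: "hwt G f \<Longrightarrow> hwt G g \<Longrightarrow>
     heq G (HComp (HBr (hcod G f) (hcod G g)) (HTens f g)) (HComp (HTens g f) (HBr (hdom G f) (hdom G g)))"
| br_hex1: "set A \<subseteq> gMor G \<Longrightarrow> set B \<subseteq> gMor G \<Longrightarrow> set C \<subseteq> gMor G \<Longrightarrow>
     heq G (HBr A (B @ C)) (HComp (HTens (HId B) (HBr A C)) (HTens (HBr A B) (HId C)))"
| br_hex2: "set A \<subseteq> gMor G \<Longrightarrow> set B \<subseteq> gMor G \<Longrightarrow> set C \<subseteq> gMor G \<Longrightarrow>
     heq G (HBr (A @ B) C) (HComp (HTens (HBr A C) (HId B)) (HTens (HId A) (HBr B C)))"
| br_inv1: "set A \<subseteq> gMor G \<Longrightarrow> set B \<subseteq> gMor G \<Longrightarrow> heq G (HComp (HBrI A B) (HBr A B)) (HId (A @ B))"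
| br_inv2: "set A \<subseteq> gMor G \<Longrightarrow> set B \<subseteq> gMor G \<Longrightarrow> heq G (HComp (HBr A B) (HBrI A B)) (HId (B @ A))"
| coassoc: "g \<in> gMor G \<Longrightarrow>
     heq G (HComp (HTens (HDelta g) (HId [g])) (HDelta g)) (HComp (HTens (HId [g]) (HDelta g)) (HDelta g))"
| counit_left: "g \<in> gMor G \<Longrightarrow> heq G (HComp (HTens (HEps g) (HId [g])) (HDelta g)) (HId [g])"
| counit_right: "g \<in> gMor G \<Longrightarrow> heq G (HComp (HTens (HId [g]) (HEps g)) (HDelta g)) (HId [g])"
| massoc: "g \<in> gMor G \<Longrightarrow> h \<in> gMor G \<Longrightarrow> k \<in> gMor G \<Longrightarrow> gtgt G g = gsrc G h \<Longrightarrow> gtgt G h = gsrc G k \<Longrightarrow>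
     heq G (HComp (HMult (gcmp G g h) k) (HTens (HMult g h) (HId [k])))
           (HComp (HMult g (gcmp G h k)) (HTens (HId [g]) (HMult h k)))"
| unit_left: "g \<in> gMor G \<Longrightarrow>
     heq G (HComp (HMult (gidn G (gsrc G g)) g) (HTens (HUnit (gsrc G g)) (HId [g]))) (HId [g])"
| unit_right: "g \<in> gMor G \<Longrightarrow>
     heq G (HComp (HMult g (gidn G (gtgt G g))) (HTens (HId [g]) (HUnit (gtgt G g)))) (HId [g])"
| bialg_delta_mult: "g \<in> gMor G \<Longrightarrow> h \<in> gMor G \<Longrightarrow> gtgt G g = gsrc G h \<Longrightarrow>
     heq G (HComp (HDelta (gcmp G g h)) (HMult g h))
           (HComp (HTens (HMult g h) (HMult g h))
              (HComp (HTens (HTens (HId [g]) (HBr [g] [h])) (HId [h])) (HTens (HDelta g) (HDelta h))))"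
| bialg_eps_mult: "g \<in> gMor G \<Longrightarrow> h \<in> gMor G \<Longrightarrow> gtgt G g = gsrc G h \<Longrightarrow>
     heq G (HComp (HEps (gcmp G g h)) (HMult g h)) (HTens (HEps g) (HEps h))"
| bialg_delta_unit: "i \<in> gOb G \<Longrightarrow>
     heq G (HComp (HDelta (gidn G i)) (HUnit i)) (HTens (HUnit i) (HUnit i))"
| bialg_eps_unit: "i \<in> gOb G \<Longrightarrow> heq G (HComp (HEps (gidn G i)) (HUnit i)) (HId [])"
| antipode_left: "g \<in> gMor G \<Longrightarrow>
     heq G (HComp (HMult (ginv G g) g) (HComp (HTens (HS g) (HId [g])) (HDelta g)))
           (HComp (HUnit (gtgt G g)) (HEps g))"
| antipode_right: "g \<in> gMor G \<Longrightarrow>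
     heq G (HComp (HMult g (ginv G g)) (HComp (HTens (HId [g]) (HS g)) (HDelta g)))
           (HComp (HUnit (gsrc G g)) (HEps g))"
| antipode_inv1: "g \<in> gMor G \<Longrightarrow> heq G (HComp (HSi g) (HS g)) (HId [g])"
| antipode_inv2: "g \<in> gMor G \<Longrightarrow> heq G (HComp (HS g) (HSi g)) (HId [ginv G g])"
| cointegral: "i \<in> gOb G \<Longrightarrow>
     heq G (HComp (HTens (HId [gidn G i]) (Hcoint i)) (HDelta (gidn G i))) (HComp (HUnit i) (Hcoint i))"
| integral: "g \<in> gMor G \<Longrightarrow> h \<in> gMor G \<Longrightarrow> gtgt G g = gsrc G h \<Longrightarrow>
     heq G (HComp (HMult g h) (HTens (Hint g) (HId [h]))) (HComp (Hint (gcmp G g h)) (HEps h))"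
| normal1: "i \<in> gOb G \<Longrightarrow> heq G (HComp (Hcoint i) (Hint (gidn G i))) (HId [])"
| normal2: "i \<in> gOb G \<Longrightarrow>
     heq G (HComp (Hcoint i) (HComp (HS (gidn G i)) (Hint (gidn G i)))) (HId [])"

text \<open>Duals: H_g^* = H_g, hence (A \<diamond> B)^* = B^* \<diamond> A^* gives A^* = rev A.\<close>

definition hdual :: "'g list \<Rightarrow> 'g list" where
  "hdual A = rev A"

definition hLam_gen :: "'g \<Rightarrow> ('o, 'g) hterm" where
  "hLam_gen g = HComp (HDelta g) (Hint g)"

definition hlam_gen :: "('o, 'g) groupoid \<Rightarrow> 'g \<Rightarrow> ('o, 'g) hterm" where
  "hlam_gen G g = HComp (Hcoint (gsrc G g)) (HComp (HMult g (ginv G g)) (HTens (HId [g]) (HS g)))"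

fun hLam :: "('o, 'g) groupoid \<Rightarrow> 'g list \<Rightarrow> ('o, 'g) hterm" where
  "hLam G [] = HId []"
| "hLam G (g # B) = HComp (HTens (HTens (HId (hdual B)) (hLam_gen g)) (HId B)) (hLam G B)"

fun hlam :: "('o, 'g) groupoid \<Rightarrow> 'g list \<Rightarrow> ('o, 'g) hterm" where
  "hlam G [] = HId []"
| "hlam G (g # B) = HComp (hlam_gen G g) (HTens (HTens (HId [g]) (hlam G B)) (HId (hdual [g])))"

definition is_right_dual :: "('o, 'g) groupoid \<Rightarrow> 'g list \<Rightarrow> 'g list \<Rightarrow> ('o, 'g) hterm \<Rightarrow> ('o, 'g) hterm \<Rightarrow> bool" where
  "is_right_dual G A Ad Lm lm \<longleftrightarrow>
     hwt G Lm \<and> hdom G Lm = [] \<and> hcod G Lm = Ad @ A \<and>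
     hwt G lm \<and> hdom G lm = A @ Ad \<and> hcod G lm = [] \<and>
     heq G (HComp (HTens lm (HId A)) (HTens (HId A) Lm)) (HId A) \<and>
     heq G (HComp (HTens (HId Ad) lm) (HTens Lm (HId Ad))) (HId Ad)"

end

theory Submission
  imports Defs
begin

locale hgrp =
  fixes G :: "('o, 'g) groupoid"
  assumes grp: "is_groupoid G"
begin

abbreviation "Mor \<equiv> gMor G"

lemma g_src_tgt[simp]: "g \<in> Mor \<Longrightarrow> gsrc G g \<in> gOb G" "g \<in> Mor \<Longrightarrow> gtgt G g \<in> gOb G"
  using grp unfolding is_groupoid_def by auto

lemma g_idn[simp]: "i \<in> gOb G \<Longrightarrow> gidn G i \<in> Mor"
  "i \<in> gOb G \<Longrightarrow> gsrc G (gidn G i) = i" "i \<in> gOb G \<Longrightarrow> gtgt G (gidn G i) = i"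
  using grp unfolding is_groupoid_def by auto

lemma g_cmp[simp]: "g \<in> Mor \<Longrightarrow> h \<in> Mor \<Longrightarrow> gtgt G g = gsrc G h \<Longrightarrow> gcmp G g h \<in> Mor"
  "g \<in> Mor \<Longrightarrow> h \<in> Mor \<Longrightarrow> gtgt G g = gsrc G h \<Longrightarrow> gsrc G (gcmp G g h) = gsrc G g"
  "g \<in> Mor \<Longrightarrow> h \<in> Mor \<Longrightarrow> gtgt G g = gsrc G h \<Longrightarrow> gtgt G (gcmp G g h) = gtgt G h"
  using grp unfolding is_groupoid_def by auto

lemma g_inv[simp]: "g \<in> Mor \<Longrightarrow> ginv G g \<in> Mor"
  "g \<in> Mor \<Longrightarrow> gsrc G (ginv G g) = gtgt G g" "g \<in> Mor \<Longrightarrow> gtgt G (ginv G g) = gsrc G g"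
  "g \<in> Mor \<Longrightarrow> gcmp G g (ginv G g) = gidn G (gsrc G g)"
  "g \<in> Mor \<Longrightarrow> gcmp G (ginv G g) g = gidn G (gtgt G g)"
  using grp unfolding is_groupoid_def by auto

lemma g_unit[simp]: "g \<in> Mor \<Longrightarrow> gcmp G (gidn G (gsrc G g)) g = g"
  "g \<in> Mor \<Longrightarrow> gcmp G g (gidn G (gtgt G g)) = g"
  using grp unfolding is_groupoid_def by auto

lemma g_assoc: "g \<in> Mor \<Longrightarrow> h \<in> Mor \<Longrightarrow> k \<in> Mor \<Longrightarrow> gtgt G g = gsrc G h \<Longrightarrow> gtgt G h = gsrc G k \<Longrightarrow>
  gcmp G (gcmp G g h) k = gcmp G g (gcmp G h k)"
  using grp unfolding is_groupoid_def by blast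

lemma g_idn_idn[simp]: "i \<in> gOb G \<Longrightarrow> gcmp G (gidn G i) (gidn G i) = gidn G i"
  using g_unit(1)[of "gidn G i"] by simp

lemma g_inv_idn[simp]: "i \<in> gOb G \<Longrightarrow> ginv G (gidn G i) = gidn G i"
proof -
  assume i: "i \<in> gOb G"
  have "gcmp G (gidn G i) (ginv G (gidn G i)) = gidn G i" using i by simp
  moreover have "gcmp G (gidn G i) (ginv G (gidn G i)) = ginv G (gidn G i)"
    using g_unit(1)[of "ginv G (gidn G i)"] i by simp
  ultimately show ?thesis by simp
qed

lemma hwt_set: "hwt G f \<Longrightarrow> set (hdom G f) \<subseteq> Mor \<and> set (hcod G f) \<subseteq> Mor"
  by (induction f) auto

lemma hwt_setD[simp]: "hwt G f \<Longrightarrow> x \<in> set (hdom G f) \<Longrightarrow> x \<in> Mor"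
  "hwt G f \<Longrightarrow> x \<in> set (hcod G f) \<Longrightarrow> x \<in> Mor"
  using hwt_set by auto

lemma heq_wt: "heq G f g \<Longrightarrow> hwt G f \<and> hwt G g \<and> hdom G f = hdom G g \<and> hcod G f = hcod G g"
proof (induction rule: heq.induct)
  case (massoc g h k)
  then show ?case by (simp add: g_assoc)
qed (auto)


declare heq.trans[trans]

lemma heq_wtD: assumes "heq G f g"
  shows "hwt G f" "hwt G g" "hdom G f = hdom G g" "hcod G f = hcod G g"
  using heq_wt[OF assms] by auto

lemma tc1: "heq G f f' \<Longrightarrow> hwt G g \<Longrightarrow> heq G (HTens f g) (HTens f' g)"
  by (rule heq.tens_cong, assumption, rule heq.refl)
lemma tc2: "hwt G f \<Longrightarrow> heq G g g' \<Longrightarrow> heq G (HTens f g) (HTens f g')"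
  by (rule heq.tens_cong, rule heq.refl)
lemma cc1: "heq G f f' \<Longrightarrow> hwt G g \<Longrightarrow> hcod G g = hdom G f \<Longrightarrow> heq G (HComp f g) (HComp f' g)"
  by (rule heq.comp_cong, assumption, rule heq.refl)
lemma cc2: "hwt G f \<Longrightarrow> heq G g g' \<Longrightarrow> hcod G g = hdom G f \<Longrightarrow> heq G (HComp f g) (HComp f g')"
  by (rule heq.comp_cong, rule heq.refl)

definition lay :: "'g list \<Rightarrow> ('o,'g) hterm \<Rightarrow> 'g list \<Rightarrow> ('o,'g) hterm" where
  "lay A t B = HTens (HTens (HId A) t) (HId B)"

lemma lay_wt[simp]: "hwt G (lay A t B) = (set A \<subseteq> Mor \<and> hwt G t \<and> set B \<subseteq> Mor)"
  "hdom G (lay A t B) = A @ hdom G t @ B" "hcod G (lay A t B) = A @ hcod G t @ B"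
  by (auto simp: lay_def)

lemma lay_cong: "heq G t t' \<Longrightarrow> set A \<subseteq> Mor \<Longrightarrow> set B \<subseteq> Mor \<Longrightarrow> heq G (lay A t B) (lay A t' B)"
  unfolding lay_def by (intro tc1 tc2) auto

lemma lay_comp:
  assumes "hwt G a" "hwt G b" "hcod G b = hdom G a" "set A \<subseteq> Mor" "set B \<subseteq> Mor"
  shows "heq G (HComp (lay A a B) (lay A b B)) (lay A (HComp a b) B)"
proof -
  have "heq G (HComp (lay A a B) (lay A b B))
      (HTens (HComp (HTens (HId A) a) (HTens (HId A) b)) (HComp (HId B) (HId B)))"
    unfolding lay_def using assms by (intro heq.interchange) auto
  also have "heq G \<dots> (HTens (HTens (HComp (HId A) (HId A)) (HComp a b)) (HId B))"
    using assms by (intro heq.tens_cong heq.interchange) (auto intro: heq.id_left[where f="HId B", simplified])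
  also have "heq G \<dots> (HTens (HTens (HId A) (HComp a b)) (HId B))"
    using assms by (intro tc1 heq.refl) (auto intro: heq.id_left[where f="HId A", simplified])
  finally show ?thesis unfolding lay_def .
qed

lemma tens_split:
  assumes "hwt G a" "hwt G b"
  shows "heq G (HComp (HTens a (HId (hcod G b))) (HTens (HId (hdom G a)) b)) (HTens a b)"
proof -
  have "heq G (HComp (HTens a (HId (hcod G b))) (HTens (HId (hdom G a)) b))
     (HTens (HComp a (HId (hdom G a))) (HComp (HId (hcod G b)) b))"
    using assms hwt_set by (intro heq.interchange) auto
  also have "heq G \<dots> (HTens a b)"
    using assms by (intro heq.tens_cong heq.id_left heq.id_right)
  finally show ?thesis .
qed

lemma tens_split':
  assumes "hwt G a" "hwt G b"
  shows "heq G (HComp (HTens (HId (hcod G a)) b) (HTens a (HId (hdom G b)))) (HTens a b)"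
proof -
  have "heq G (HComp (HTens (HId (hcod G a)) b) (HTens a (HId (hdom G b))))
     (HTens (HComp (HId (hcod G a)) a) (HComp b (HId (hdom G b))))"
    using assms hwt_set by (intro heq.interchange) auto
  also have "heq G \<dots> (HTens a b)"
    using assms by (intro heq.tens_cong heq.id_left heq.id_right)
  finally show ?thesis .
qed

lemma lay_tensR:
  assumes "hwt G a" "set A \<subseteq> Mor" "set M \<subseteq> Mor" "set B \<subseteq> Mor"
  shows "heq G (lay A (HTens a (HId M)) B) (lay A a (M @ B))"
proof -
  have "heq G (lay A (HTens a (HId M)) B) (HTens (HTens (HTens (HId A) a) (HId M)) (HId B))"
    unfolding lay_def using assms by (intro tc1 heq.sym[OF heq.tens_assoc]) auto
  also have "heq G \<dots> (HTens (HTens (HId A) a) (HTens (HId M) (HId B)))"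
    using assms by (intro heq.tens_assoc) auto
  also have "heq G \<dots> (lay A a (M @ B))"
    unfolding lay_def using assms by (intro tc2 heq.tens_id) auto
  finally show ?thesis .
qed

lemma lay_tensL:
  assumes "hwt G b" "set A \<subseteq> Mor" "set N \<subseteq> Mor" "set B \<subseteq> Mor"
  shows "heq G (lay A (HTens (HId N) b) B) (lay (A @ N) b B)"
proof -
  have "heq G (lay A (HTens (HId N) b) B) (HTens (HTens (HTens (HId A) (HId N)) b) (HId B))"
    unfolding lay_def using assms by (intro tc1 heq.sym[OF heq.tens_assoc]) auto
  also have "heq G \<dots> (lay (A @ N) b B)"
    unfolding lay_def using assms by (intro tc1 heq.tens_id) auto
  finally show ?thesis .
qed

lemma lay_lay:
  assumes "hwt G t" "set A \<subseteq> Mor" "set A' \<subseteq> Mor" "set B \<subseteq> Mor" "set B' \<subseteq> Mor"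
  shows "heq G (lay A (lay A' t B') B) (lay (A @ A') t (B' @ B))"
proof -
  have "heq G (lay A (lay A' t B') B) (lay A (HTens (HId A') t) (B' @ B))"
    unfolding lay_def[of A' t B'] using assms by (intro lay_tensR) auto
  also have "heq G \<dots> (lay (A @ A') t (B' @ B))"
    using assms by (intro lay_tensL) auto
  finally show ?thesis .
qed

lemma lay_nil: "hwt G t \<Longrightarrow> heq G (lay [] t []) t"
  unfolding lay_def
  by (rule heq.trans[OF tc1[OF heq.tens_unit_left] heq.tens_unit_right]) auto

lemma lay_id: "set A \<subseteq> Mor \<Longrightarrow> set M \<subseteq> Mor \<Longrightarrow> set B \<subseteq> Mor \<Longrightarrow> heq G (lay A (HId M) B) (HId (A @ M @ B))"
proof -
  assume a: "set A \<subseteq> Mor" "set M \<subseteq> Mor" "set B \<subseteq> Mor"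
  have "heq G (lay A (HId M) B) (HTens (HId (A @ M)) (HId B))"
    unfolding lay_def using a by (intro tc1 heq.tens_id) auto
  also have "heq G \<dots> (HId ((A @ M) @ B))" using a by (intro heq.tens_id) auto
  finally show ?thesis by simp
qed

definition cls :: "('o,'g) hterm \<Rightarrow> ('o,'g) hterm set" where
  "cls t = Collect (heq G t)"

lemma cls_self: "hwt G t \<Longrightarrow> t \<in> cls t"
  unfolding cls_def by (auto intro: heq.refl)

lemma cls_bad: "\<not> hwt G t \<Longrightarrow> cls t = {}"
  unfolding cls_def using heq_wtD by auto

lemma cls_heq: "heq G a b \<Longrightarrow> cls a = cls b"
  unfolding cls_def by (auto intro: heq.trans heq.sym)

lemma cls_eqD: "cls a = cls b \<Longrightarrow> hwt G a \<Longrightarrow> heq G a b"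
  unfolding cls_def using heq.refl heq.sym by blast

lemma cls_comp_congR: assumes "cls a = cls b" shows "cls (HComp c a) = cls (HComp c b)"
proof (cases "hwt G (HComp c a) \<or> hwt G (HComp c b)")
  case True
  then show ?thesis
  proof
    assume w: "hwt G (HComp c a)"
    then have "heq G a b" using assms cls_eqD by auto
    then show ?thesis using w heq_wtD[of a b] by (intro cls_heq cc2) auto
  next
    assume w: "hwt G (HComp c b)"
    then have "heq G b a" using assms cls_eqD by auto
    then show ?thesis using w heq_wtD[of b a] by (intro cls_heq[symmetric] cc2) auto
  qed
qed (auto simp: cls_bad)

lemma cls_comp_congL: assumes "cls a = cls b" shows "cls (HComp a c) = cls (HComp b c)"
proof (cases "hwt G (HComp a c) \<or> hwt G (HComp b c)")
  case True
  then show ?thesis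
  proof
    assume w: "hwt G (HComp a c)"
    then have "heq G a b" using assms cls_eqD by auto
    then show ?thesis using w heq_wtD[of a b] by (intro cls_heq cc1) auto
  next
    assume w: "hwt G (HComp b c)"
    then have "heq G b a" using assms cls_eqD by auto
    then show ?thesis using w heq_wtD[of b a] by (intro cls_heq[symmetric] cc1) auto
  qed
qed (auto simp: cls_bad)

lemma cls_assoc: "cls (HComp (HComp a b) c) = cls (HComp a (HComp b c))"
proof (cases "hwt G (HComp (HComp a b) c) \<or> hwt G (HComp a (HComp b c))")
  case True
  then show ?thesis by (intro cls_heq heq.comp_assoc) auto
qed (auto simp: cls_bad)

definition apC :: "('o,'g) hterm \<Rightarrow> ('o,'g) hterm set \<Rightarrow> ('o,'g) hterm set" where
  "apC P X = {h. \<exists>x. X = cls x \<and> heq G (HComp P x) h}"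

lemma apC_cls: "apC P (cls x) = cls (HComp P x)"
proof
  show "apC P (cls x) \<subseteq> cls (HComp P x)"
  proof
    fix h assume "h \<in> apC P (cls x)"
    then obtain x' where "cls x = cls x'" "heq G (HComp P x') h" unfolding apC_def by auto
    then have "h \<in> cls (HComp P x')" unfolding cls_def by auto
    then show "h \<in> cls (HComp P x)" using cls_comp_congR[OF \<open>cls x = cls x'\<close>] by simp
  qed
qed (auto simp: apC_def cls_def)

lemma apC_noncls: "\<forall>x. X \<noteq> cls x \<Longrightarrow> apC P X = {}"
  unfolding apC_def by auto

lemma empty_cls: "\<exists>x. {} = cls x"
proof -
  obtain a :: 'g where True by simp
  have "\<not> hwt G (HComp (HId [a]) (HId []))" by simp
  then show ?thesis using cls_bad by metis
qed

lemma apC_empty: "apC P {} = {}"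
proof -
  { fix h x assume a: "{} = cls x" "heq G (HComp P x) h"
    then have "hwt G x" using heq_wtD(1)[OF a(2)] by simp
    then have False using cls_self a(1) by blast }
  then show ?thesis unfolding apC_def by blast
qed

lemma apC_comp: "apC P (apC Q X) = apC (HComp P Q) X"
proof (cases "\<exists>x. X = cls x")
  case True
  then obtain x where "X = cls x" by auto
  then show ?thesis by (simp add: apC_cls cls_assoc)
next
  case False
  then show ?thesis by (simp add: apC_noncls apC_empty)
qed

lemma apC_heq: "heq G P Q \<Longrightarrow> apC P X = apC Q X"
proof (cases "\<exists>x. X = cls x")
  case True
  assume "heq G P Q"
  then have e: "cls P = cls Q" by (rule cls_heq)
  from True obtain x where x: "X = cls x" by blast
  show ?thesis unfolding x apC_cls using cls_comp_congL[OF e] by blast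
qed (auto simp: apC_noncls)

lemma apC_bad: "\<not> hwt G P \<Longrightarrow> apC P X = {}"
proof -
  assume n: "\<not> hwt G P"
  { fix h x assume a: "heq G (HComp P x) h"
    have False using heq_wtD(1)[OF a] n by simp }
  then show ?thesis unfolding apC_def by blast
qed

definition ap :: "'g list \<Rightarrow> ('o,'g) hterm \<Rightarrow> 'g list \<Rightarrow> ('o,'g) hterm set \<Rightarrow> ('o,'g) hterm set" where
  "ap A t B X = apC (lay A t B) X"

lemma ap_heq: "heq G a b \<Longrightarrow> ap A a B X = ap A b B X"
proof -
  assume h: "heq G a b"
  show ?thesis
  proof (cases "set A \<subseteq> Mor \<and> set B \<subseteq> Mor")
    case True
    then show ?thesis unfolding ap_def using h by (intro apC_heq lay_cong) auto
  next
    case False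
    then show ?thesis unfolding ap_def by (auto simp: apC_bad)
  qed
qed

lemma ap_comp: "hwt G a \<Longrightarrow> hwt G b \<Longrightarrow> hcod G b = hdom G a \<Longrightarrow> set A \<subseteq> Mor \<Longrightarrow> set B \<subseteq> Mor \<Longrightarrow>
  ap A (HComp a b) B X = ap A a B (ap A b B X)"
  unfolding ap_def apC_comp by (intro apC_heq heq.sym[OF lay_comp]) auto

lemma ap_tens: assumes "hwt G a" "hwt G b" "set A \<subseteq> Mor" "set B \<subseteq> Mor"
  shows "ap A (HTens a b) B X = ap A a (hcod G b @ B) (ap (A @ hdom G a) b B X)"
proof -
  have "heq G (lay A (HTens a b) B) (lay A (HComp (HTens a (HId (hcod G b))) (HTens (HId (hdom G a)) b)) B)"
    using assms by (intro lay_cong heq.sym[OF tens_split]) auto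
  also have "heq G \<dots> (HComp (lay A (HTens a (HId (hcod G b))) B) (lay A (HTens (HId (hdom G a)) b) B))"
    using assms hwt_set by (intro heq.sym[OF lay_comp]) auto
  also have "heq G \<dots> (HComp (lay A a (hcod G b @ B)) (lay (A @ hdom G a) b B))"
    using assms hwt_set by (intro heq.comp_cong lay_tensR lay_tensL) auto
  finally show ?thesis unfolding ap_def apC_comp by (rule apC_heq)
qed

lemma ap_tens': assumes "hwt G a" "hwt G b" "set A \<subseteq> Mor" "set B \<subseteq> Mor"
  shows "ap A (HTens a b) B X = ap (A @ hcod G a) b B (ap A a (hdom G b @ B) X)"
proof -
  have "heq G (lay A (HTens a b) B) (lay A (HComp (HTens (HId (hcod G a)) b) (HTens a (HId (hdom G b)))) B)"
    using assms by (intro lay_cong heq.sym[OF tens_split']) auto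
  also have "heq G \<dots> (HComp (lay A (HTens (HId (hcod G a)) b) B) (lay A (HTens a (HId (hdom G b))) B))"
    using assms hwt_set by (intro heq.sym[OF lay_comp]) auto
  also have "heq G \<dots> (HComp (lay (A @ hcod G a) b B) (lay A a (hdom G b @ B)))"
    using assms hwt_set by (intro heq.comp_cong lay_tensR lay_tensL) auto
  finally show ?thesis unfolding ap_def apC_comp by (rule apC_heq)
qed

lemma ap_lay: "hwt G t \<Longrightarrow> set A \<subseteq> Mor \<Longrightarrow> set A' \<subseteq> Mor \<Longrightarrow> set B \<subseteq> Mor \<Longrightarrow> set B' \<subseteq> Mor \<Longrightarrow>
   ap A (lay A' t B') B X = ap (A @ A') t (B' @ B) X"
  unfolding ap_def by (intro apC_heq lay_lay)

lemma slide:
  assumes "hwt G f" "hwt G g" "set A \<subseteq> Mor" "set M \<subseteq> Mor" "set B \<subseteq> Mor"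
  shows "ap A f (M @ hcod G g @ B) (ap (A @ hdom G f @ M) g B X) =
         ap (A @ hcod G f @ M) g B (ap A f (M @ hdom G g @ B) X)"
proof -
  have "ap A f (M @ hcod G g @ B) (ap (A @ hdom G f @ M) g B X) = ap A (HTens f (HTens (HId M) g)) B X"
  proof -
    have "ap A (HTens f (HTens (HId M) g)) B X = ap A f (M @ hcod G g @ B) (ap (A @ hdom G f) (HTens (HId M) g) B X)"
      using assms by (subst ap_tens) auto
    also have "ap (A @ hdom G f) (HTens (HId M) g) B X = ap (A @ hdom G f @ M) g B X"
      unfolding ap_def using assms hwt_set lay_tensL[of g "A @ hdom G f" M B] by (intro apC_heq) simp
    finally show ?thesis by simp
  qed
  also have "\<dots> = ap A (HTens (HTens f (HId M)) g) B X"
    using assms hwt_set unfolding ap_def by (intro apC_heq lay_cong heq.sym[OF heq.tens_assoc]) auto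
  also have "\<dots> = ap (A @ hcod G f @ M) g B (ap A f (M @ hdom G g @ B) X)"
  proof -
    have "ap A (HTens (HTens f (HId M)) g) B X = ap (A @ hcod G f @ M) g B (ap A (HTens f (HId M)) (hdom G g @ B) X)"
      using assms by (subst ap_tens') auto
    also have "ap A (HTens f (HId M)) (hdom G g @ B) X = ap A f (M @ hdom G g @ B) X"
      unfolding ap_def using assms hwt_set by (intro apC_heq lay_tensR) auto
    finally show ?thesis by simp
  qed
  finally show ?thesis .
qed

lemma ap_id_down: "A @ M @ B = A' @ hcod G t @ B' \<Longrightarrow> hwt G t \<Longrightarrow> set A' \<subseteq> Mor \<Longrightarrow> set B' \<subseteq> Mor \<Longrightarrow>
   ap A (HId M) B (ap A' t B' X) = ap A' t B' X"
proof -
  assume e: "A @ M @ B = A' @ hcod G t @ B'" and w: "hwt G t" "set A' \<subseteq> Mor" "set B' \<subseteq> Mor"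
  have s: "set (A @ M @ B) \<subseteq> Mor" unfolding e using w hwt_set by auto
  then have s1: "set A \<subseteq> Mor" "set M \<subseteq> Mor" "set B \<subseteq> Mor" by auto
  have "heq G (HComp (lay A (HId M) B) (lay A' t B')) (HComp (HId (A @ M @ B)) (lay A' t B'))"
    apply (rule cc1, rule lay_id) using s1 s w e by auto
  also have "heq G \<dots> (lay A' t B')" unfolding e using w
    using heq.id_left[of G "lay A' t B'"] by simp
  finally show ?thesis unfolding ap_def apC_comp by (rule apC_heq)
qed

lemma ap_id_up: "A' @ M @ B' = A @ hdom G t @ B \<Longrightarrow> hwt G t \<Longrightarrow> set A \<subseteq> Mor \<Longrightarrow> set B \<subseteq> Mor \<Longrightarrow>
   ap A t B (ap A' (HId M) B' X) = ap A t B X"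
proof -
  assume e: "A' @ M @ B' = A @ hdom G t @ B" and w: "hwt G t" "set A \<subseteq> Mor" "set B \<subseteq> Mor"
  have s: "set (A' @ M @ B') \<subseteq> Mor" unfolding e using w hwt_set by auto
  then have s1: "set A' \<subseteq> Mor" "set M \<subseteq> Mor" "set B' \<subseteq> Mor" by auto
  have "heq G (HComp (lay A t B) (lay A' (HId M) B')) (HComp (lay A t B) (HId (A' @ M @ B')))"
    apply (rule cc2[OF _ lay_id]) using s1 s w e by auto
  also have "heq G \<dots> (lay A t B)" unfolding e using w
    using heq.id_right[of G "lay A t B"] by simp
  finally show ?thesis unfolding ap_def apC_comp by (rule apC_heq)
qed

lemma ap_id_base: "N = A @ M @ B \<Longrightarrow> set N \<subseteq> Mor \<Longrightarrow> ap A (HId M) B (cls (HId N)) = cls (HId N)"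
proof -
  assume e: "N = A @ M @ B" and s: "set N \<subseteq> Mor"
  have s1: "set A \<subseteq> Mor" "set M \<subseteq> Mor" "set B \<subseteq> Mor" using s e by auto
  have "heq G (HComp (lay A (HId M) B) (HId N)) (HComp (HId N) (HId N))"
    apply (rule cc1) using s1 s e by (auto intro: lay_id)
  also have "heq G \<dots> (HId N)" using s by (rule_tac heq.id_left[where f="HId N", simplified]) auto
  finally show ?thesis unfolding ap_def apC_cls by (rule cls_heq)
qed

lemma ap_start: "hwt G t \<Longrightarrow> cls t = ap [] t [] (cls (HId (hdom G t)))"
proof -
  assume w: "hwt G t"
  have "heq G (HComp (lay [] t []) (HId (hdom G t))) (HComp t (HId (hdom G t)))"
    using w by (intro cc1 lay_nil) auto
  also have "heq G \<dots> t" using w by (rule heq.id_right)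
  finally show ?thesis unfolding ap_def apC_cls by (rule cls_heq[symmetric])
qed

lemma ap_final: "hwt G t \<Longrightarrow> hdom G t = N \<Longrightarrow> hcod G t = N \<Longrightarrow>
   ap [] t [] (cls (HId N)) = cls (HId N) \<Longrightarrow> heq G t (HId N)"
  using ap_start cls_eqD by metis

end


context hgrp
begin

lemmas apx = ap_comp ap_tens ap_id_down ap_id_up

lemma ax_counitL: "g \<in> Mor \<Longrightarrow> set A \<subseteq> Mor \<Longrightarrow> set B \<subseteq> Mor \<Longrightarrow>
  ap A (HEps g) (g # B) (ap A (HDelta g) B X) = ap A (HId [g]) B X"
  using ap_heq[OF heq.counit_left, of g A B X] by (simp add: apx)

lemma ax_counitR: "g \<in> Mor \<Longrightarrow> set A \<subseteq> Mor \<Longrightarrow> set B \<subseteq> Mor \<Longrightarrow>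
  ap (A @ [g]) (HEps g) B (ap A (HDelta g) B X) = ap A (HId [g]) B X"
  using ap_heq[OF heq.counit_right, of g A B X] by (simp add: apx)

lemma ax_coassoc: "g \<in> Mor \<Longrightarrow> set A \<subseteq> Mor \<Longrightarrow> set B \<subseteq> Mor \<Longrightarrow>
  ap A (HDelta g) (g # B) (ap A (HDelta g) B X) = ap (A @ [g]) (HDelta g) B (ap A (HDelta g) B X)"
  using ap_heq[OF heq.coassoc, of g A B X] by (simp add: apx)

lemma ax_massoc: "g \<in> Mor \<Longrightarrow> h \<in> Mor \<Longrightarrow> k \<in> Mor \<Longrightarrow> gtgt G g = gsrc G h \<Longrightarrow> gtgt G h = gsrc G k \<Longrightarrow>
  set A \<subseteq> Mor \<Longrightarrow> set B \<subseteq> Mor \<Longrightarrow>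
  ap A (HMult (gcmp G g h) k) B (ap A (HMult g h) (k # B) X) = ap A (HMult g (gcmp G h k)) B (ap (A @ [g]) (HMult h k) B X)"
  using ap_heq[OF heq.massoc, of g h k A B X] by (simp add: apx)

lemma ax_unitL: "g \<in> Mor \<Longrightarrow> set A \<subseteq> Mor \<Longrightarrow> set B \<subseteq> Mor \<Longrightarrow>
  ap A (HMult (gidn G (gsrc G g)) g) B (ap A (HUnit (gsrc G g)) (g # B) X) = ap A (HId [g]) B X"
  using ap_heq[OF heq.unit_left, of g A B X] by (simp add: apx)

lemma ax_unitR: "g \<in> Mor \<Longrightarrow> set A \<subseteq> Mor \<Longrightarrow> set B \<subseteq> Mor \<Longrightarrow>
  ap A (HMult g (gidn G (gtgt G g))) B (ap (A @ [g]) (HUnit (gtgt G g)) B X) = ap A (HId [g]) B X"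
  using ap_heq[OF heq.unit_right, of g A B X] by (simp add: apx)

lemma ax_bialg: "g \<in> Mor \<Longrightarrow> h \<in> Mor \<Longrightarrow> gtgt G g = gsrc G h \<Longrightarrow> set A \<subseteq> Mor \<Longrightarrow> set B \<subseteq> Mor \<Longrightarrow>
  ap A (HDelta (gcmp G g h)) B (ap A (HMult g h) B X) =
  ap A (HMult g h) (gcmp G g h # B) (ap (A @ [g, h]) (HMult g h) B (ap (A @ [g]) (HBr [g] [h]) (h # B)
    (ap A (HDelta g) (h # h # B) (ap (A @ [g]) (HDelta h) B X))))"
  using ap_heq[OF heq.bialg_delta_mult, of g h A B X] by (simp add: apx)

lemma ax_bialg_eps: "g \<in> Mor \<Longrightarrow> h \<in> Mor \<Longrightarrow> gtgt G g = gsrc G h \<Longrightarrow> set A \<subseteq> Mor \<Longrightarrow> set B \<subseteq> Mor \<Longrightarrow>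
  ap A (HEps (gcmp G g h)) B (ap A (HMult g h) B X) = ap A (HEps g) B (ap (A @ [g]) (HEps h) B X)"
  using ap_heq[OF heq.bialg_eps_mult, of g h A B X] by (simp add: apx)

lemma ax_delta_unit: "i \<in> gOb G \<Longrightarrow> set A \<subseteq> Mor \<Longrightarrow> set B \<subseteq> Mor \<Longrightarrow>
  ap A (HDelta (gidn G i)) B (ap A (HUnit i) B X) = ap A (HUnit i) (gidn G i # B) (ap A (HUnit i) B X)"
  using ap_heq[OF heq.bialg_delta_unit, of i A B X] by (simp add: apx)

lemma ax_antiL: "g \<in> Mor \<Longrightarrow> set A \<subseteq> Mor \<Longrightarrow> set B \<subseteq> Mor \<Longrightarrow>
  ap A (HMult (ginv G g) g) B (ap A (HS g) (g # B) (ap A (HDelta g) B X)) = ap A (HUnit (gtgt G g)) B (ap A (HEps g) B X)"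
  using ap_heq[OF heq.antipode_left, of g A B X] by (simp add: apx)

lemma ax_antiR: "g \<in> Mor \<Longrightarrow> set A \<subseteq> Mor \<Longrightarrow> set B \<subseteq> Mor \<Longrightarrow>
  ap A (HMult g (ginv G g)) B (ap (A @ [g]) (HS g) B (ap A (HDelta g) B X)) = ap A (HUnit (gsrc G g)) B (ap A (HEps g) B X)"
  using ap_heq[OF heq.antipode_right, of g A B X] by (simp add: apx)

lemma ax_coint: "i \<in> gOb G \<Longrightarrow> set A \<subseteq> Mor \<Longrightarrow> set B \<subseteq> Mor \<Longrightarrow>
  ap (A @ [gidn G i]) (Hcoint i) B (ap A (HDelta (gidn G i)) B X) = ap A (HUnit i) B (ap A (Hcoint i) B X)"
  using ap_heq[OF heq.cointegral, of i A B X] by (simp add: apx)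

lemma ax_integral: "g \<in> Mor \<Longrightarrow> h \<in> Mor \<Longrightarrow> gtgt G g = gsrc G h \<Longrightarrow> set A \<subseteq> Mor \<Longrightarrow> set B \<subseteq> Mor \<Longrightarrow>
  ap A (HMult g h) B (ap A (Hint g) (h # B) X) = ap A (Hint (gcmp G g h)) B (ap A (HEps h) B X)"
  using ap_heq[OF heq.integral, of g h A B X] by (simp add: apx)

lemma ax_normal1: "i \<in> gOb G \<Longrightarrow> set A \<subseteq> Mor \<Longrightarrow> set B \<subseteq> Mor \<Longrightarrow>
  ap A (Hcoint i) B (ap A (Hint (gidn G i)) B X) = ap A (HId []) B X"
  using ap_heq[OF heq.normal1, of i A B X] by (simp add: apx)

lemma ax_normal2: "i \<in> gOb G \<Longrightarrow> set A \<subseteq> Mor \<Longrightarrow> set B \<subseteq> Mor \<Longrightarrow>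
  ap A (Hcoint i) B (ap A (HS (gidn G i)) B (ap A (Hint (gidn G i)) B X)) = ap A (HId []) B X"
  using ap_heq[OF heq.normal2, of i A B X] by (simp add: apx)

lemma ax_hex1: "set A \<subseteq> Mor \<Longrightarrow> set B \<subseteq> Mor \<Longrightarrow> set C \<subseteq> Mor \<Longrightarrow> set P \<subseteq> Mor \<Longrightarrow> set Q \<subseteq> Mor \<Longrightarrow>
  ap P (HBr A (B @ C)) Q X = ap (P @ B) (HBr A C) Q (ap P (HBr A B) (C @ Q) X)"
  using ap_heq[OF heq.br_hex1, of A B C P Q X] by (simp add: apx)

lemma ax_hex2: "set A \<subseteq> Mor \<Longrightarrow> set B \<subseteq> Mor \<Longrightarrow> set C \<subseteq> Mor \<Longrightarrow> set P \<subseteq> Mor \<Longrightarrow> set Q \<subseteq> Mor \<Longrightarrow>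
  ap P (HBr (A @ B) C) Q X = ap P (HBr A C) (B @ Q) (ap (P @ A) (HBr B C) Q X)"
  using ap_heq[OF heq.br_hex2, of A B C P Q X] by (simp add: apx)

lemma ax_brinv1: "set A \<subseteq> Mor \<Longrightarrow> set B \<subseteq> Mor \<Longrightarrow> set P \<subseteq> Mor \<Longrightarrow> set Q \<subseteq> Mor \<Longrightarrow>
  ap P (HBrI A B) Q (ap P (HBr A B) Q X) = ap P (HId (A @ B)) Q X"
  using ap_heq[OF heq.br_inv1, of A B P Q X] by (simp add: apx)

lemma ax_brinv2: "set A \<subseteq> Mor \<Longrightarrow> set B \<subseteq> Mor \<Longrightarrow> set P \<subseteq> Mor \<Longrightarrow> set Q \<subseteq> Mor \<Longrightarrow>
  ap P (HBr A B) Q (ap P (HBrI A B) Q X) = ap P (HId (B @ A)) Q X"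
  using ap_heq[OF heq.br_inv2, of A B P Q X] by (simp add: apx)

lemma ax_brnat: "hwt G f \<Longrightarrow> hwt G g \<Longrightarrow> set P \<subseteq> Mor \<Longrightarrow> set Q \<subseteq> Mor \<Longrightarrow>
  ap P (HBr (hcod G f) (hcod G g)) Q (ap P (HTens f g) Q X) = ap P (HTens g f) Q (ap P (HBr (hdom G f) (hdom G g)) Q X)"
  using ap_heq[OF heq.br_natural, of f g P Q X] hwt_set by (simp add: apx)

lemma br_nil_left: "set C \<subseteq> Mor \<Longrightarrow> set P \<subseteq> Mor \<Longrightarrow> set Q \<subseteq> Mor \<Longrightarrow>
  ap P (HBr [] C) Q X = ap P (HId C) Q X"
proof -
  assume s: "set C \<subseteq> Mor" "set P \<subseteq> Mor" "set Q \<subseteq> Mor"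
  have "ap P (HBr [] C) Q X = ap P (HBr [] C) Q (ap P (HBr [] C) Q (ap P (HBrI [] C) Q X))"
    using s by (simp add: ax_brinv2 ap_id_up)
  also have "\<dots> = ap P (HBr [] C) Q (ap P (HBrI [] C) Q X)"
    using s ax_hex2[of "[]" "[]" C P Q] by simp
  also have "\<dots> = ap P (HId C) Q X"
    using s by (simp add: ax_brinv2)
  finally show ?thesis .
qed

lemma br_nil_right: "set C \<subseteq> Mor \<Longrightarrow> set P \<subseteq> Mor \<Longrightarrow> set Q \<subseteq> Mor \<Longrightarrow>
  ap P (HBr C []) Q X = ap P (HId C) Q X"
proof -
  assume s: "set C \<subseteq> Mor" "set P \<subseteq> Mor" "set Q \<subseteq> Mor"
  have "ap P (HBr C []) Q X = ap P (HBr C []) Q (ap P (HBr C []) Q (ap P (HBrI C []) Q X))"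
    using s by (simp add: ax_brinv2 ap_id_up)
  also have "\<dots> = ap P (HBr C []) Q (ap P (HBrI C []) Q X)"
    using s ax_hex1[of C "[]" "[]" P Q] by simp
  also have "\<dots> = ap P (HId C) Q X"
    using s by (simp add: ax_brinv2)
  finally show ?thesis .
qed

lemma nat_int: "i \<in> gOb G \<Longrightarrow> h \<in> Mor \<Longrightarrow> set A \<subseteq> Mor \<Longrightarrow> set B \<subseteq> Mor \<Longrightarrow>
  ap A (HBr [gidn G i] [h]) B (ap A (Hint (gidn G i)) (h # B) X) = ap (A @ [h]) (Hint (gidn G i)) B X"
  using ax_brnat[of "Hint (gidn G i)" "HId [h]" A B X] by (simp add: apx br_nil_left)

lemma nat_delta: "i \<in> gOb G \<Longrightarrow> h \<in> Mor \<Longrightarrow> set A \<subseteq> Mor \<Longrightarrow> set B \<subseteq> Mor \<Longrightarrow>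
  ap (A @ [h]) (HDelta (gidn G i)) B (ap A (HBr [gidn G i] [h]) B X) =
  ap A (HBr [gidn G i] [h]) (gidn G i # B) (ap (A @ [gidn G i]) (HBr [gidn G i] [h]) B (ap A (HDelta (gidn G i)) (h # B) X))"
  using ax_brnat[of "HDelta (gidn G i)" "HId [h]" A B X] ax_hex2[of "[gidn G i]" "[gidn G i]" "[h]" A B]
  by (simp add: apx)

lemma nat_eps: "a \<in> Mor \<Longrightarrow> h \<in> Mor \<Longrightarrow> set A \<subseteq> Mor \<Longrightarrow> set B \<subseteq> Mor \<Longrightarrow>
  ap A (HEps h) (a # B) (ap A (HBr [a] [h]) B X) = ap (A @ [a]) (HEps h) B X"
  using ax_brnat[of "HId [a]" "HEps h" A B X] by (simp add: apx br_nil_right)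

lemma nat_coint: "i \<in> gOb G \<Longrightarrow> h \<in> Mor \<Longrightarrow> set A \<subseteq> Mor \<Longrightarrow> set B \<subseteq> Mor \<Longrightarrow>
  ap (A @ [h]) (Hcoint i) B (ap A (HBr [gidn G i] [h]) B X) = ap A (Hcoint i) (h # B) X"
  using ax_brnat[of "Hcoint i" "HId [h]" A B X] by (simp add: apx br_nil_left)

lemma nat_delta_r: "a \<in> Mor \<Longrightarrow> g \<in> Mor \<Longrightarrow> set A \<subseteq> Mor \<Longrightarrow> set B \<subseteq> Mor \<Longrightarrow>
  ap (A @ [g]) (HBr [a] [g]) B (ap A (HBr [a] [g]) (g # B) (ap (A @ [a]) (HDelta g) B X)) =
  ap A (HDelta g) (a # B) (ap A (HBr [a] [g]) B X)"
  using ax_brnat[of "HId [a]" "HDelta g" A B X] ax_hex1[of "[a]" "[g]" "[g]" A B]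
  by (simp add: apx)

abbreviation ee :: "'g \<Rightarrow> 'g" where "ee g \<equiv> gidn G (gsrc G g)"
abbreviation bb :: "'g \<Rightarrow> 'g" where "bb g \<equiv> ginv G g"

lemma lemK:
  assumes g: "g \<in> Mor"
  shows "ap [] (HMult (ee g) g) [ee g] (ap [ee g] (HBr [ee g] [g]) [] (ap [] (HDelta (ee g)) [g] (ap [] (Hint (ee g)) [g] X)))
   = ap [g] (HMult g (bb g)) [] (ap [g, g] (HS g) [] (ap [] (HDelta g) [g] (ap [] (Hint g) [g] X)))"
proof -
  let ?e = "ee g" and ?b = "bb g"
  have "ap [] (HMult ?e g) [?e] (ap [?e] (HBr [?e] [g]) [] (ap [] (HDelta ?e) [g] (ap [] (Hint ?e) [g] X)))
    = ap [] (HMult ?e g) [?e] (ap [?e] (HBr [?e] [g]) [] (ap [] (HDelta ?e) [g] (ap [] (Hint ?e) [g]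
       (ap [g] (HEps g) [] (ap [] (HDelta g) [] X)))))"
    using g ax_counitR[of g "[]" "[]"] by (simp add: ap_id_up)
  also have "\<dots> = ap [] (HMult ?e g) [?e] (ap [?e, g, ?e] (HEps g) [] (ap [?e] (HBr [?e] [g]) [g]
       (ap [] (HDelta ?e) [g, g] (ap [] (Hint ?e) [g, g] (ap [] (HDelta g) [] X)))))"
    using g slide[of "Hint ?e" "HEps g" "[]" "[g]" "[]"] slide[of "HDelta ?e" "HEps g" "[]" "[g]" "[]"] slide[of "HBr [?e] [g]" "HEps g" "[?e]" "[]" "[]"] by (simp)
  also have "\<dots> = ap [] (HMult ?e g) [?e] (ap [?e, g] (HMult ?e ?e) [] (ap [?e, g, ?e] (HMult g ?b) []
       (ap [?e, g, ?e, g] (HS g) [] (ap [?e, g, ?e] (HDelta g) [] (ap [?e] (HBr [?e] [g]) [g]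
       (ap [] (HDelta ?e) [g, g] (ap [] (Hint ?e) [g, g] (ap [] (HDelta g) [] X))))))))"
    using g ax_antiR[of g "[?e, g, ?e]" "[]"] ax_unitR[of ?e "[?e, g]" "[]"] by (simp add: ap_id_down)
  also have "\<dots> = ap [] (HMult ?e g) [?e] (ap [?e, g] (HMult g ?b) [] (ap [?e, g] (HMult ?e g) [?b]
       (ap [?e, g, ?e, g] (HS g) [] (ap [?e, g, ?e] (HDelta g) [] (ap [?e] (HBr [?e] [g]) [g]
       (ap [] (HDelta ?e) [g, g] (ap [] (Hint ?e) [g, g] (ap [] (HDelta g) [] X))))))))"
    using g ax_massoc[of ?e g ?b "[?e, g]" "[]"] by (simp)
  also have "\<dots> = ap [] (HMult ?e g) [?e] (ap [?e, g] (HMult g ?b) [] (ap [?e, g] (HMult ?e g) [?b]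
       (ap [?e, g, ?e, g] (HS g) [] (ap [?e] (HBr [?e] [g]) [g, g]
       (ap [] (HDelta ?e) [g, g, g] (ap [] (Hint ?e) [g, g, g] (ap [] (HDelta g) [g] (ap [] (HDelta g) [] X))))))))"
    using g slide[of "HBr [?e] [g]" "HDelta g" "[?e]" "[]" "[]", symmetric] slide[of "HDelta ?e" "HDelta g" "[]" "[g]" "[]", symmetric] slide[of "Hint ?e" "HDelta g" "[]" "[g]" "[]", symmetric] ax_coassoc[of g "[]" "[]", symmetric] by (simp)
  also have "\<dots> = ap [g] (HMult g ?b) [] (ap [] (HMult ?e g) [g, ?b] (ap [?e, g] (HMult ?e g) [?b]
       (ap [?e, g, ?e, g] (HS g) [] (ap [?e] (HBr [?e] [g]) [g, g]
       (ap [] (HDelta ?e) [g, g, g] (ap [] (Hint ?e) [g, g, g] (ap [] (HDelta g) [g] (ap [] (HDelta g) [] X))))))))"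
    using g slide[of "HMult ?e g" "HMult g ?b" "[]" "[]" "[]"] by (simp)
  also have "\<dots> = ap [g] (HMult g ?b) [] (ap [] (HMult ?e g) [g, ?b] (ap [?e, g] (HMult ?e g) [?b]
       (ap [?e] (HBr [?e] [g]) [g, ?b]
       (ap [] (HDelta ?e) [g, g, ?b] (ap [] (Hint ?e) [g, g, ?b] (ap [] (HDelta g) [?b] (ap [g] (HS g) [] (ap [] (HDelta g) [] X))))))))"
    using g slide[of "HBr [?e] [g]" "HS g" "[?e]" "[g]" "[]", symmetric] slide[of "HDelta ?e" "HS g" "[]" "[g, g]" "[]", symmetric] slide[of "Hint ?e" "HS g" "[]" "[g, g]" "[]", symmetric] slide[of "HDelta g" "HS g" "[]" "[]" "[]", symmetric] by (simp)
  also have "\<dots> = ap [g] (HMult g ?b) [] (ap [] (HMult ?e g) [g, ?b] (ap [?e, g] (HMult ?e g) [?b]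
       (ap [?e] (HBr [?e] [g]) [g, ?b]
       (ap [] (HDelta ?e) [g, g, ?b] (ap [?e] (HDelta g) [?b] (ap [] (Hint ?e) [g, ?b] (ap [g] (HS g) [] (ap [] (HDelta g) [] X))))))))"
    using g slide[of "Hint ?e" "HDelta g" "[]" "[]" "[?b]"] by (simp)
  also have "\<dots> = ap [g] (HMult g ?b) [] (ap [] (HDelta g) [?b] (ap [] (HMult ?e g) [?b]
       (ap [] (Hint ?e) [g, ?b] (ap [g] (HS g) [] (ap [] (HDelta g) [] X)))))"
    using g ax_bialg[of ?e g "[]" "[?b]"] by (simp)
  also have "\<dots> = ap [g] (HMult g ?b) [] (ap [] (HDelta g) [?b] (ap [] (Hint g) [?b]
       (ap [] (HEps g) [?b] (ap [g] (HS g) [] (ap [] (HDelta g) [] X)))))"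
    using g ax_integral[of ?e g "[]" "[?b]"] by (simp)
  also have "\<dots> = ap [g] (HMult g ?b) [] (ap [] (HDelta g) [?b] (ap [] (Hint g) [?b] (ap [] (HS g) [] X)))"
    using g slide[of "HEps g" "HS g" "[]" "[]" "[]"] ax_counitL[of g "[]" "[]"] by (simp add: ap_id_up)
  also have "\<dots> = ap [g] (HMult g ?b) [] (ap [g, g] (HS g) [] (ap [] (HDelta g) [g] (ap [] (Hint g) [g] X)))"
    using g slide[of "Hint g" "HS g" "[]" "[]" "[]"] slide[of "HDelta g" "HS g" "[]" "[]" "[]"] by (simp)
  finally show ?thesis .
qed

lemma lemZ2:
  assumes g: "g \<in> Mor"
  shows "ap [g] (Hcoint (gsrc G g)) [] (ap [g] (HMult g (bb g)) [] (ap [g, g] (HS g) [] (ap [] (HDelta g) [g] (ap [] (Hint g) [g] X))))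
   = ap [] (HId [g]) [] X"
proof -
  let ?e = "ee g" and ?b = "bb g" and ?i = "gsrc G g"
  have "ap [g] (Hcoint ?i) [] (ap [g] (HMult g ?b) [] (ap [g, g] (HS g) [] (ap [] (HDelta g) [g] (ap [] (Hint g) [g] X))))
    = ap [g] (Hcoint ?i) [] (ap [] (HMult ?e g) [?e] (ap [?e] (HBr [?e] [g]) [] (ap [] (HDelta ?e) [g] (ap [] (Hint ?e) [g] X))))"
    using lemK[OF g, of X] by simp
  also have "\<dots> = ap [] (HMult ?e g) [] (ap [?e, g] (Hcoint ?i) [] (ap [?e] (HBr [?e] [g]) [] (ap [] (HDelta ?e) [g] (ap [] (Hint ?e) [g] X))))"
    using g slide[of "HMult ?e g" "Hcoint ?i" "[]" "[]" "[]"] by simp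
  also have "\<dots> = ap [] (HMult ?e g) [] (ap [?e] (Hcoint ?i) [g] (ap [] (HDelta ?e) [g] (ap [] (Hint ?e) [g] X)))"
    using g nat_coint[of ?i g "[?e]" "[]"] by simp
  also have "\<dots> = ap [] (HId [g]) [] X"
    using g ax_coint[of ?i "[]" "[g]"] ax_normal1[of ?i "[]" "[g]"] ax_unitL[of g "[]" "[]"] by (simp add: ap_id_up)
  finally show ?thesis .
qed

lemma lemD:
  assumes g: "g \<in> Mor" and B: "set B \<subseteq> Mor"
  shows "ap [] (HMult g (bb g)) B (ap [g] (HS g) B (ap [g] (HMult (ee g) g) B (ap [] (HBr [ee g] [g]) (g # B)
            (ap [ee g] (HDelta g) B X))))
   = ap [ee g] (HEps g) B (ap [] (HS (ee g)) (g # B) X)"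
proof -
  let ?e = "ee g" and ?b = "bb g" and ?i = "gsrc G g"
  have "ap [] (HMult g ?b) B (ap [g] (HS g) B (ap [g] (HMult ?e g) B (ap [] (HBr [?e] [g]) (g # B)
            (ap [?e] (HDelta g) B X))))
   = ap [] (HMult g ?b) B (ap [g] (HS g) B (ap [g] (HMult ?e g) B (ap [] (HBr [?e] [g]) (g # B)
            (ap [?e] (HDelta g) B (ap [] (HEps ?e) (?e # g # B) (ap [] (HDelta ?e) (g # B) X))))))"
    using g B ax_counitL[of ?e "[]" "g # B"] by (simp add: ap_id_up)
  also have "\<dots> = ap [] (HMult g ?b) B (ap [g] (HS g) B (ap [g] (HMult ?e g) B
       (ap [] (HMult ?e g) (?e # g # B) (ap [] (HUnit ?i) (g # ?e # g # B) (ap [] (HEps ?e) (g # ?e # g # B)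
       (ap [?e] (HBr [?e] [g]) (g # B) (ap [?e, ?e] (HDelta g) B (ap [] (HDelta ?e) (g # B) X))))))))"
    using g B slide[of "HEps ?e" "HDelta g" "[]" "[?e]" B, symmetric] slide[of "HEps ?e" "HBr [?e] [g]" "[]" "[]" "g # B", symmetric]
      ax_unitL[of g "[]" "?e # g # B"] by (simp add: ap_id_down)
  also have "\<dots> = ap [] (HMult g ?b) B (ap [g] (HS g) B (ap [g] (HMult ?e g) B
       (ap [] (HMult ?e g) (?e # g # B) (ap [] (HMult ?e ?e) (g # ?e # g # B) (ap [] (HS ?e) (?e # g # ?e # g # B)
       (ap [] (HDelta ?e) (g # ?e # g # B)
       (ap [?e] (HBr [?e] [g]) (g # B) (ap [?e, ?e] (HDelta g) B (ap [] (HDelta ?e) (g # B) X)))))))))"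
    using g B ax_antiL[of ?e "[]" "g # ?e # g # B"] by simp
  also have "\<dots> = ap [] (HMult g ?b) B (ap [g] (HS g) B (ap [g] (HMult ?e g) B
       (ap [] (HMult ?e g) (?e # g # B) (ap [] (HMult ?e ?e) (g # ?e # g # B) (ap [] (HS ?e) (?e # g # ?e # g # B)
       (ap [?e, ?e] (HBr [?e] [g]) (g # B) (ap [?e, ?e, ?e] (HDelta g) B
       (ap [?e] (HDelta ?e) (g # B) (ap [] (HDelta ?e) (g # B) X)))))))))"
    using g B slide[of "HDelta ?e" "HBr [?e] [g]" "[]" "[]" "g # B"] slide[of "HDelta ?e" "HDelta g" "[]" "[?e]" B]
      ax_coassoc[of ?e "[]" "g # B"] by simp
  also have "\<dots> = ap [] (HMult g ?b) B (ap [g] (HS g) B (ap [g] (HMult ?e g) B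
       (ap [] (HMult ?e g) (?e # g # B) (ap [?e] (HMult ?e g) (?e # g # B) (ap [] (HS ?e) (?e # g # ?e # g # B)
       (ap [?e, ?e] (HBr [?e] [g]) (g # B) (ap [?e, ?e, ?e] (HDelta g) B
       (ap [?e] (HDelta ?e) (g # B) (ap [] (HDelta ?e) (g # B) X)))))))))"
    using g B ax_massoc[of ?e ?e g "[]" "?e # g # B"] by simp
  also have "\<dots> = ap [] (HMult ?e ?e) B (ap [?e] (HMult g ?b) B (ap [?e, g] (HS g) B (ap [?e, g] (HMult ?e g) B
       (ap [?e] (HMult ?e g) (?e # g # B) (ap [] (HS ?e) (?e # g # ?e # g # B)
       (ap [?e, ?e] (HBr [?e] [g]) (g # B) (ap [?e, ?e, ?e] (HDelta g) B
       (ap [?e] (HDelta ?e) (g # B) (ap [] (HDelta ?e) (g # B) X)))))))))"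
    using g B slide[of "HMult ?e g" "HMult ?e g" "[]" "[]" B, symmetric] slide[of "HMult ?e g" "HS g" "[]" "[]" B, symmetric]
      ax_massoc[of ?e g ?b "[]" B] by simp
  also have "\<dots> = ap [] (HMult ?e ?e) B (ap [] (HS ?e) (?e # B) (ap [?e] (HMult g ?b) B (ap [?e, g] (HS g) B
       (ap [?e] (HMult ?e g) (g # B) (ap [?e, ?e, g] (HMult ?e g) B
       (ap [?e, ?e] (HBr [?e] [g]) (g # B) (ap [?e] (HDelta ?e) (g # g # B)
       (ap [?e, ?e] (HDelta g) B (ap [] (HDelta ?e) (g # B) X)))))))))"
    using g B slide[of "HS ?e" "HMult ?e g" "[]" "[]" "?e # g # B", symmetric] slide[of "HS ?e" "HMult ?e g" "[]" "[g]" B, symmetric]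
      slide[of "HS ?e" "HS g" "[]" "[g]" B, symmetric] slide[of "HS ?e" "HMult g ?b" "[]" "[]" B, symmetric]
      slide[of "HMult ?e g" "HMult ?e g" "[?e]" "[]" B, symmetric] slide[of "HDelta ?e" "HDelta g" "[?e]" "[]" B, symmetric]
    by simp
  also have "\<dots> = ap [] (HMult ?e ?e) B (ap [] (HS ?e) (?e # B) (ap [?e] (HMult g ?b) B (ap [?e, g] (HS g) B
       (ap [?e] (HDelta g) B (ap [?e] (HMult ?e g) B (ap [] (HDelta ?e) (g # B) X))))))"
    using g B ax_bialg[of ?e g "[?e]" B] by simp
  also have "\<dots> = ap [] (HMult ?e ?e) B (ap [] (HS ?e) (?e # B) (ap [?e] (HUnit ?i) B (ap [?e] (HEps g) B
       (ap [?e] (HMult ?e g) B (ap [] (HDelta ?e) (g # B) X)))))"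
    using g B ax_antiR[of g "[?e]" B] by simp
  also have "\<dots> = ap [] (HMult ?e ?e) B (ap [] (HS ?e) (?e # B) (ap [?e] (HUnit ?i) B (ap [?e] (HEps g) B X)))"
    using g B ax_bialg_eps[of ?e g "[?e]" B] slide[of "HDelta ?e" "HEps g" "[]" "[]" B, symmetric] ax_counitR[of ?e "[]" B]
    by (simp add: ap_id_up)
  also have "\<dots> = ap [?e] (HEps g) B (ap [] (HS ?e) (g # B) X)"
    using g B slide[of "HS ?e" "HUnit ?i" "[]" "[]" B] ax_unitR[of ?e "[]" B] slide[of "HS ?e" "HEps g" "[]" "[]" B]
    by (simp add: ap_id_down)
  finally show ?thesis .
qed

lemma lemD':
  assumes g: "g \<in> Mor" and B: "set B \<subseteq> Mor"
  shows "ap [] (HMult (ee g) (ee g)) (ee g # B) (ap [ee g] (HBr [ee g] [ee g]) B (ap [] (HDelta (ee g)) (ee g # B)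
           (ap [] (HS (ee g)) (ee g # B) (ap [] (HDelta (ee g)) B X))))
   = ap [ee g] (HS (ee g)) B (ap [] (HUnit (gsrc G g)) (ee g # B) X)"
proof -
  let ?e = "ee g" and ?i = "gsrc G g"
  have "ap [] (HMult ?e ?e) (?e # B) (ap [?e] (HBr [?e] [?e]) B (ap [] (HDelta ?e) (?e # B)
           (ap [] (HS ?e) (?e # B) (ap [] (HDelta ?e) B X))))
    = ap [] (HMult ?e ?e) (?e # B) (ap [?e] (HBr [?e] [?e]) B (ap [] (HDelta ?e) (?e # B)
           (ap [] (HS ?e) (?e # B) (ap [?e, ?e] (HEps ?e) B (ap [?e] (HDelta ?e) B (ap [] (HDelta ?e) B X))))))"
    using g B ax_counitR[of ?e "[?e]" B] by (simp add: ap_id_up)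
  also have "\<dots> = ap [?e, ?e] (HEps ?e) B (ap [] (HMult ?e ?e) (?e # ?e # B) (ap [?e] (HBr [?e] [?e]) (?e # B)
           (ap [] (HDelta ?e) (?e # ?e # B) (ap [] (HS ?e) (?e # ?e # B) (ap [?e] (HDelta ?e) B (ap [] (HDelta ?e) B X))))))"
    using g B slide[of "HS ?e" "HEps ?e" "[]" "[?e]" B] slide[of "HDelta ?e" "HEps ?e" "[]" "[?e]" B]
      slide[of "HBr [?e] [?e]" "HEps ?e" "[?e]" "[]" B] slide[of "HMult ?e ?e" "HEps ?e" "[]" "[?e]" B]
    by simp
  also have "\<dots> = ap [?e] (HMult ?e ?e) B (ap [?e, ?e] (HMult ?e ?e) B (ap [?e, ?e, ?e] (HS ?e) B (ap [?e, ?e] (HDelta ?e) B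
           (ap [] (HMult ?e ?e) (?e # ?e # B) (ap [?e] (HBr [?e] [?e]) (?e # B)
           (ap [] (HDelta ?e) (?e # ?e # B) (ap [] (HS ?e) (?e # ?e # B) (ap [?e] (HDelta ?e) B (ap [] (HDelta ?e) B X)))))))))"
    using g B ax_unitR[of ?e "[?e]" B] ax_antiR[of ?e "[?e, ?e]" B] by (simp add: ap_id_down)
  also have "\<dots> = ap [?e] (HMult ?e ?e) B (ap [?e] (HMult ?e ?e) (?e # B) (ap [?e, ?e, ?e] (HS ?e) B (ap [?e, ?e] (HDelta ?e) B
           (ap [] (HMult ?e ?e) (?e # ?e # B) (ap [?e] (HBr [?e] [?e]) (?e # B)
           (ap [] (HDelta ?e) (?e # ?e # B) (ap [] (HS ?e) (?e # ?e # B) (ap [?e] (HDelta ?e) B (ap [] (HDelta ?e) B X)))))))))"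
    using g B ax_massoc[of ?e ?e ?e "[?e]" B] by simp
  also have "\<dots> = ap [?e] (HMult ?e ?e) B (ap [?e] (HMult ?e ?e) (?e # B) (ap [?e, ?e, ?e] (HS ?e) B
           (ap [] (HMult ?e ?e) (?e # ?e # ?e # B) (ap [?e] (HBr [?e] [?e]) (?e # ?e # B)
           (ap [] (HDelta ?e) (?e # ?e # ?e # B) (ap [] (HS ?e) (?e # ?e # ?e # B)
           (ap [?e] (HDelta ?e) (?e # B) (ap [?e] (HDelta ?e) B (ap [] (HDelta ?e) B X)))))))))"
    using g B slide[of "HMult ?e ?e" "HDelta ?e" "[]" "[?e]" B, symmetric] slide[of "HBr [?e] [?e]" "HDelta ?e" "[?e]" "[]" B, symmetric]
      slide[of "HDelta ?e" "HDelta ?e" "[]" "[?e]" B, symmetric] slide[of "HS ?e" "HDelta ?e" "[]" "[?e]" B, symmetric]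
      ax_coassoc[of ?e "[?e]" B] by simp
  also have "\<dots> = ap [?e] (HMult ?e ?e) B (ap [] (HMult ?e ?e) (?e # ?e # B) (ap [?e, ?e] (HMult ?e ?e) (?e # B)
           (ap [?e] (HBr [?e] [?e]) (?e # ?e # B) (ap [] (HDelta ?e) (?e # ?e # ?e # B) (ap [?e] (HDelta ?e) (?e # B)
           (ap [?e, ?e] (HS ?e) B (ap [] (HS ?e) (?e # ?e # B) (ap [?e] (HDelta ?e) B (ap [] (HDelta ?e) B X)))))))))"
    using g B slide[of "HMult ?e ?e" "HS ?e" "[]" "[?e, ?e]" B, symmetric] slide[of "HBr [?e] [?e]" "HS ?e" "[?e]" "[?e]" B, symmetric]
      slide[of "HDelta ?e" "HS ?e" "[]" "[?e, ?e]" B, symmetric] slide[of "HS ?e" "HS ?e" "[]" "[?e, ?e]" B, symmetric]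
      slide[of "HDelta ?e" "HS ?e" "[?e]" "[]" B, symmetric] slide[of "HS ?e" "HDelta ?e" "[]" "[]" "?e # B"]
      slide[of "HMult ?e ?e" "HMult ?e ?e" "[]" "[]" "?e # B", symmetric]
    by simp
  also have "\<dots> = ap [?e] (HMult ?e ?e) B (ap [] (HDelta ?e) (?e # B) (ap [] (HMult ?e ?e) (?e # B)
           (ap [?e, ?e] (HS ?e) B (ap [] (HS ?e) (?e # ?e # B) (ap [?e] (HDelta ?e) B (ap [] (HDelta ?e) B X))))))"
    using g B ax_bialg[of ?e ?e "[]" "?e # B"] by simp
  also have "\<dots> = ap [?e] (HMult ?e ?e) B (ap [] (HDelta ?e) (?e # B) (ap [] (HUnit ?i) (?e # B) (ap [] (HEps ?e) (?e # B)
           (ap [?e] (HS ?e) B (ap [] (HDelta ?e) B X)))))"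
    using g B ax_coassoc[of ?e "[]" B, symmetric] slide[of "HS ?e" "HS ?e" "[]" "[?e]" B, symmetric]
      slide[of "HDelta ?e" "HS ?e" "[]" "[]" B, symmetric] ax_antiL[of ?e "[]" "?e # B"]
    by simp
  also have "\<dots> = ap [] (HUnit ?i) (?e # B) (ap [] (HS ?e) B X)"
    using g B ax_delta_unit[of ?i "[]" "?e # B"] slide[of "HUnit ?i" "HMult ?e ?e" "[]" "[]" B, symmetric]
      ax_unitL[of ?e "[]" B] slide[of "HEps ?e" "HS ?e" "[]" "[]" B] ax_counitL[of ?e "[]" B]
    by (simp add: ap_id_up)
  also have "\<dots> = ap [?e] (HS ?e) B (ap [] (HUnit ?i) (?e # B) X)"
    using g B slide[of "HUnit ?i" "HS ?e" "[]" "[]" B] by simp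
  finally show ?thesis .
qed

lemma lemC:
  assumes g: "g \<in> Mor" and B: "set B \<subseteq> Mor"
  shows "ap [] (Hcoint (gsrc G g)) (ee g # B) (ap [] (HS (ee g)) (ee g # B) (ap [] (HDelta (ee g)) B (ap [] (Hint (ee g)) B X)))
   = ap [] (HUnit (gsrc G g)) B X"
proof -
  let ?e = "ee g" and ?i = "gsrc G g"
  have "ap [] (Hcoint ?i) (?e # B) (ap [] (HS ?e) (?e # B) (ap [] (HDelta ?e) B (ap [] (Hint ?e) B X)))
    = ap [] (HMult ?e ?e) B (ap [?e] (Hcoint ?i) (?e # B) (ap [] (HDelta ?e) (?e # B)
       (ap [] (HS ?e) (?e # B) (ap [] (HDelta ?e) B (ap [] (Hint ?e) B X)))))"
    using g B ax_unitL[of ?e "[]" B] ax_coint[of ?i "[]" "?e # B"] by (simp add: ap_id_down)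
  also have "\<dots> = ap [?e] (Hcoint ?i) B (ap [] (HMult ?e ?e) (?e # B) (ap [?e] (HBr [?e] [?e]) B (ap [] (HDelta ?e) (?e # B)
       (ap [] (HS ?e) (?e # B) (ap [] (HDelta ?e) B (ap [] (Hint ?e) B X))))))"
    using g B nat_coint[of ?i ?e "[?e]" B, symmetric] slide[of "HMult ?e ?e" "Hcoint ?i" "[]" "[]" B] by simp
  also have "\<dots> = ap [?e] (Hcoint ?i) B (ap [?e] (HS ?e) B (ap [] (HUnit ?i) (?e # B) (ap [] (Hint ?e) B X)))"
    using g B lemD'[OF g B] by simp
  also have "\<dots> = ap [] (HUnit ?i) B X"
    using g B slide[of "HUnit ?i" "Hint ?e" "[]" "[]" B] ax_normal2[of ?i "[?e]" B] by (simp add: ap_id_down)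
  finally show ?thesis .
qed

lemma lemZ1:
  assumes g: "g \<in> Mor"
  shows "ap [] (Hcoint (gsrc G g)) [g] (ap [] (HMult g (bb g)) [g] (ap [g] (HS g) [g] (ap [g] (HDelta g) [] (ap [g] (Hint g) [] X))))
   = ap [] (HId [g]) [] X"
proof -
  let ?e = "ee g" and ?b = "bb g" and ?i = "gsrc G g"
  have g1: "set [g] \<subseteq> Mor" using g by simp
  have "ap [] (Hcoint ?i) [g] (ap [] (HMult g ?b) [g] (ap [g] (HS g) [g] (ap [g] (HDelta g) [] (ap [g] (Hint g) [] X))))
   = ap [] (Hcoint ?i) [g] (ap [] (HMult g ?b) [g] (ap [g] (HS g) [g] (ap [g] (HDelta g) [] (ap [g] (HMult ?e g) []
       (ap [g] (Hint ?e) [g] (ap [] (HDelta g) [] X))))))"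
    using g ax_integral[of ?e g "[g]" "[]"] ax_counitR[of g "[]" "[]"] by (simp add: ap_id_up)
  also have "\<dots> = ap [] (Hcoint ?i) [g] (ap [] (HMult g ?b) [g] (ap [g] (HS g) [g] (ap [g] (HDelta g) [] (ap [g] (HMult ?e g) []
       (ap [] (HBr [?e] [g]) [g] (ap [?e] (HDelta g) [] (ap [] (Hint ?e) [g] X)))))))"
    using g nat_int[of ?i g "[]" "[g]"] slide[of "Hint ?e" "HDelta g" "[]" "[]" "[]", symmetric] by simp
  also have "\<dots> = ap [] (Hcoint ?i) [g] (ap [] (HMult g ?b) [g] (ap [g] (HS g) [g] (ap [g] (HMult ?e g) [g]
       (ap [g, ?e, g] (HMult ?e g) [] (ap [g, ?e] (HBr [?e] [g]) [g] (ap [g] (HDelta ?e) [g, g] (ap [g, ?e] (HDelta g) []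
       (ap [] (HBr [?e] [g]) [g] (ap [?e] (HDelta g) [] (ap [] (Hint ?e) [g] X))))))))))"
    using g ax_bialg[of ?e g "[g]" "[]"] by simp
  also have "\<dots> = ap [] (Hcoint ?i) [g] (ap [] (HMult g ?b) [g] (ap [g] (HS g) [g] (ap [g] (HMult ?e g) [g]
       (ap [g, ?e, g] (HMult ?e g) [] (ap [g, ?e] (HBr [?e] [g]) [g] (ap [g, ?e, ?e] (HDelta g) []
       (ap [] (HBr [?e] [g]) [?e, g] (ap [?e] (HBr [?e] [g]) [g] (ap [] (HDelta ?e) [g, g]
       (ap [?e] (HDelta g) [] (ap [] (Hint ?e) [g] X)))))))))))"
    using g slide[of "HDelta ?e" "HDelta g" "[g]" "[]" "[]"] nat_delta[of ?i g "[]" "[g]"] by simp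
  also have "\<dots> = ap [] (Hcoint ?i) [g] (ap [] (HMult g ?b) [g] (ap [g] (HS g) [g] (ap [g] (HMult ?e g) [g]
       (ap [g, ?e, g] (HMult ?e g) [] (ap [g, ?e] (HBr [?e] [g]) [g]
       (ap [] (HBr [?e] [g]) [?e, g, g] (ap [?e] (HBr [?e] [g]) [g, g] (ap [?e, ?e, g] (HDelta g) []
       (ap [] (HDelta ?e) [g, g] (ap [?e] (HDelta g) [] (ap [] (Hint ?e) [g] X)))))))))))"
    using g slide[of "HBr [?e] [g]" "HDelta g" "[]" "[?e]" "[]", symmetric]
      slide[of "HBr [?e] [g]" "HDelta g" "[?e]" "[]" "[]", symmetric] by simp
  also have "\<dots> = ap [] (Hcoint ?i) [g] (ap [] (HMult g ?b) [g] (ap [g] (HS g) [g] (ap [g] (HMult ?e g) [g]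
       (ap [g, ?e, g] (HMult ?e g) [] (ap [] (HBr [?e] [g]) [g, ?e, g] (ap [?e, g] (HBr [?e] [g]) [g]
       (ap [?e] (HBr [?e] [g]) [g, g] (ap [] (HDelta ?e) [g, g, g] (ap [?e] (HDelta g) [g]
       (ap [?e] (HDelta g) [] (ap [] (Hint ?e) [g] X)))))))))))"
    using g slide[of "HBr [?e] [g]" "HBr [?e] [g]" "[]" "[]" "[g]", symmetric]
      slide[of "HDelta ?e" "HDelta g" "[]" "[g]" "[]", symmetric] ax_coassoc[of g "[?e]" "[]", symmetric] by simp
  also have "\<dots> = ap [] (Hcoint ?i) [g] (ap [] (HMult g ?b) [g] (ap [g] (HS g) [g] (ap [g] (HMult ?e g) [g]
       (ap [g, ?e, g] (HMult ?e g) [] (ap [] (HBr [?e] [g]) [g, ?e, g] (ap [?e] (HDelta g) [?e, g]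
       (ap [?e] (HBr [?e] [g]) [g] (ap [] (HDelta ?e) [g, g] (ap [?e] (HDelta g) [] (ap [] (Hint ?e) [g] X))))))))))"
    using g slide[of "HDelta ?e" "HDelta g" "[]" "[]" "[g]"] nat_delta_r[of ?e g "[?e]" "[g]"] by simp
  also have "\<dots> = ap [] (Hcoint ?i) [g] (ap [] (HMult g ?b) [g] (ap [g] (HS g) [g] (ap [g] (HMult ?e g) [g]
       (ap [] (HBr [?e] [g]) [g, g] (ap [?e] (HDelta g) [g] (ap [?e, g] (HMult ?e g) []
       (ap [?e] (HBr [?e] [g]) [g] (ap [] (HDelta ?e) [g, g] (ap [?e] (HDelta g) [] (ap [] (Hint ?e) [g] X))))))))))"
    using g slide[of "HBr [?e] [g]" "HMult ?e g" "[]" "[g]" "[]", symmetric]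
      slide[of "HDelta g" "HMult ?e g" "[?e]" "[]" "[]", symmetric] by simp
  also have "\<dots> = ap [] (Hcoint ?i) [g] (ap [?e] (HEps g) [g] (ap [] (HS ?e) [g, g] (ap [?e, g] (HMult ?e g) []
       (ap [?e] (HBr [?e] [g]) [g] (ap [] (HDelta ?e) [g, g] (ap [?e] (HDelta g) [] (ap [] (Hint ?e) [g] X)))))))"
    using g lemD[OF g g1] by simp
  also have "\<dots> = ap [] (Hcoint ?i) [g] (ap [?e] (HMult ?e g) [] (ap [] (HS ?e) [?e, g] (ap [] (HDelta ?e) [g]
       (ap [] (Hint ?e) [g] X))))"
    using g slide[of "HS ?e" "HMult ?e g" "[]" "[g]" "[]"] slide[of "HEps g" "HMult ?e g" "[?e]" "[]" "[]"]
      slide[of "HS ?e" "HEps g" "[]" "[]" "[?e, g]", symmetric] nat_eps[of ?e g "[?e]" "[g]"]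
      slide[of "HDelta ?e" "HEps g" "[]" "[]" "[g]", symmetric] ax_counitL[of g "[?e]" "[]"]
    by (simp add: ap_id_up)
  also have "\<dots> = ap [] (HId [g]) [] X"
    using g slide[of "Hcoint ?i" "HMult ?e g" "[]" "[]" "[]"] lemC[OF g g1] ax_unitL[of g "[]" "[]"] by simp
  finally show ?thesis .
qed

lemma ap_id_eq: "A @ M @ B = A' @ M' @ B' \<Longrightarrow> set (A @ M @ B) \<subseteq> Mor \<Longrightarrow>
  ap A (HId M) B X = ap A' (HId M') B' X"
proof -
  assume e: "A @ M @ B = A' @ M' @ B'" and s: "set (A @ M @ B) \<subseteq> Mor"
  have s': "set (A' @ M' @ B') \<subseteq> Mor" using s e by simp
  have "heq G (lay A (HId M) B) (HId (A @ M @ B))" using s by (intro lay_id) auto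
  moreover have "heq G (lay A' (HId M') B') (HId (A' @ M' @ B'))" using s' by (intro lay_id) auto
  ultimately have "heq G (lay A (HId M) B) (lay A' (HId M') B')" unfolding e by (blast intro: heq.trans heq.sym)
  then show ?thesis unfolding ap_def by (rule apC_heq)
qed

lemma gen_wt[simp]: "g \<in> Mor \<Longrightarrow> hwt G (hLam_gen g)" "hdom G (hLam_gen g) = []" "hcod G (hLam_gen g) = [g, g]"
  "g \<in> Mor \<Longrightarrow> hwt G (hlam_gen G g)" "g \<in> Mor \<Longrightarrow> hdom G (hlam_gen G g) = [g, g]" "hcod G (hlam_gen G g) = []"
  by (auto simp: hLam_gen_def hlam_gen_def)

lemma genZ1: "g \<in> Mor \<Longrightarrow> heq G (HComp (HTens (hlam_gen G g) (HId [g])) (HTens (HId [g]) (hLam_gen g))) (HId [g])"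
proof -
  assume g: "g \<in> Mor"
  have "ap [] (HComp (HTens (hlam_gen G g) (HId [g])) (HTens (HId [g]) (hLam_gen g))) [] (cls (HId [g])) = cls (HId [g])"
    using g lemZ1[OF g, of "cls (HId [g])"] by (simp add: apx hLam_gen_def hlam_gen_def ap_id_base)
  then show ?thesis using g by (intro ap_final) (auto simp: hLam_gen_def hlam_gen_def)
qed

lemma genZ2: "g \<in> Mor \<Longrightarrow> heq G (HComp (HTens (HId [g]) (hlam_gen G g)) (HTens (hLam_gen g) (HId [g]))) (HId [g])"
proof -
  assume g: "g \<in> Mor"
  have "ap [] (HComp (HTens (HId [g]) (hlam_gen G g)) (HTens (hLam_gen g) (HId [g]))) [] (cls (HId [g])) = cls (HId [g])"
    using g lemZ2[OF g, of "cls (HId [g])"] by (simp add: apx hLam_gen_def hlam_gen_def ap_id_base)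
  then show ?thesis using g by (intro ap_final) (auto simp: hLam_gen_def hlam_gen_def)
qed

lemma wZ1: "g \<in> Mor \<Longrightarrow> set C \<subseteq> Mor \<Longrightarrow> set D \<subseteq> Mor \<Longrightarrow>
  ap C (hlam_gen G g) (g # D) (ap (C @ [g]) (hLam_gen g) D X) = ap C (HId [g]) D X"
  using ap_heq[OF genZ1, of g C D X] by (simp add: apx)

lemma wZ2: "g \<in> Mor \<Longrightarrow> set C \<subseteq> Mor \<Longrightarrow> set D \<subseteq> Mor \<Longrightarrow>
  ap (C @ [g]) (hlam_gen G g) D (ap C (hLam_gen g) (g # D) X) = ap C (HId [g]) D X"
  using ap_heq[OF genZ2, of g C D X] by (simp add: apx)

lemma lam_wt: "set A \<subseteq> Mor \<Longrightarrow> hwt G (hLam G A) \<and> hdom G (hLam G A) = [] \<and> hcod G (hLam G A) = rev A @ A \<and>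
   hwt G (hlam G A) \<and> hdom G (hlam G A) = A @ rev A \<and> hcod G (hlam G A) = []"
  by (induction A) (auto simp: hdual_def)

lemma LZ: "set A \<subseteq> Mor \<Longrightarrow>
  (\<forall>C D X. set C \<subseteq> Mor \<longrightarrow> set D \<subseteq> Mor \<longrightarrow> ap C (hlam G A) (A @ D) (ap (C @ A) (hLam G A) D X) = ap C (HId A) D X) \<and>
  (\<forall>C D X. set C \<subseteq> Mor \<longrightarrow> set D \<subseteq> Mor \<longrightarrow> ap (C @ rev A) (hlam G A) D (ap C (hLam G A) (rev A @ D) X) = ap C (HId (rev A)) D X)"
proof (induction A)
  case Nil
  then show ?case by (simp add: ap_id_down)
next
  case (Cons g B)
  have g: "g \<in> Mor" and sB: "set B \<subseteq> Mor" using Cons.prems by auto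
  note IH = Cons.IH[OF sB]
  note IH1 = IH[THEN conjunct1, rule_format] and IH2 = IH[THEN conjunct2, rule_format]
  note wt = lam_wt[OF sB]
  show ?case
  proof (intro conjI allI impI)
    fix C D X assume C: "set C \<subseteq> Mor" and D: "set D \<subseteq> Mor"
    have "ap C (hlam G (g # B)) ((g # B) @ D) (ap (C @ g # B) (hLam G (g # B)) D X)
      = ap C (hlam_gen G g) (g # B @ D) (ap (C @ [g]) (hlam G B) (g # g # B @ D) (ap (C @ g # B @ rev B) (hLam_gen g) (B @ D)
          (ap (C @ g # B) (hLam G B) D X)))"
      using g sB C D wt by (simp add: apx hdual_def)
    also have "\<dots> = ap C (hlam_gen G g) (g # B @ D) (ap (C @ [g]) (hLam_gen g) (B @ D) (ap (C @ [g]) (hlam G B) (B @ D)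
          (ap (C @ g # B) (hLam G B) D X)))"
      using g sB C D wt slide[of "hlam G B" "hLam_gen g" "C @ [g]" "[]" "B @ D"] by simp
    also have "\<dots> = ap C (HId [g]) (B @ D) X"
      using g sB C D wt IH1[of "C @ [g]" D X] wZ1[of g C "B @ D"] by (simp add: ap_id_up)
    also have "\<dots> = ap C (HId (g # B)) D X"
      using g sB C D by (intro ap_id_eq) auto
    finally show "ap C (hlam G (g # B)) ((g # B) @ D) (ap (C @ g # B) (hLam G (g # B)) D X) = ap C (HId (g # B)) D X" .
  next
    fix C D X assume C: "set C \<subseteq> Mor" and D: "set D \<subseteq> Mor"
    have "ap (C @ rev (g # B)) (hlam G (g # B)) D (ap C (hLam G (g # B)) (rev (g # B) @ D) X)
      = ap (C @ rev B @ [g]) (hlam_gen G g) D (ap (C @ rev B @ [g, g]) (hlam G B) (g # D)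
          (ap (C @ rev B) (hLam_gen g) (B @ rev B @ g # D) (ap C (hLam G B) (rev B @ g # D) X)))"
      using g sB C D wt by (simp add: apx hdual_def)
    also have "\<dots> = ap (C @ rev B @ [g]) (hlam_gen G g) D (ap (C @ rev B) (hLam_gen g) (g # D)
          (ap (C @ rev B) (hlam G B) (g # D) (ap C (hLam G B) (rev B @ g # D) X)))"
      using g sB C D wt slide[of "hLam_gen g" "hlam G B" "C @ rev B" "[]" "g # D", symmetric] by simp
    also have "\<dots> = ap (C @ rev B) (HId [g]) D X"
      using g sB C D wt IH2[of C "g # D" X] wZ2[of g "C @ rev B" D] by (simp add: ap_id_up)
    also have "\<dots> = ap C (HId (rev (g # B))) D X"
      using g sB C D by (intro ap_id_eq) auto
    finally show "ap (C @ rev (g # B)) (hlam G (g # B)) D (ap C (hLam G (g # B)) (rev (g # B) @ D) X) = ap C (HId (rev (g # B))) D X" .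
  qed
qed

end

lemma main:
  fixes G :: "('o, 'g) groupoid"
  assumes "is_groupoid G"
  shows "(\<forall>g\<in>gMor G. is_right_dual G [g] [g] (hLam_gen g) (hlam_gen G g)) \<and>
         (\<forall>A. set A \<subseteq> gMor G \<longrightarrow> is_right_dual G A (hdual A) (hLam G A) (hlam G A))"
proof -
  interpret hgrp G by (rule hgrp.intro[OF assms])
  show ?thesis
  proof (intro conjI ballI allI impI)
    fix g assume g: "g \<in> gMor G"
    show "is_right_dual G [g] [g] (hLam_gen g) (hlam_gen G g)"
      unfolding is_right_dual_def using g genZ1[OF g] genZ2[OF g] by simp
  next
    fix A assume A: "set A \<subseteq> gMor G"
    note wt = lam_wt[OF A]
    note L = LZ[OF A]
    have z1: "heq G (HComp (HTens (hlam G A) (HId A)) (HTens (HId A) (hLam G A))) (HId A)"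
    proof (rule ap_final)
      show "ap [] (HComp (HTens (hlam G A) (HId A)) (HTens (HId A) (hLam G A))) [] (cls (HId A)) = cls (HId A)"
        using A wt L[THEN conjunct1, rule_format, of "[]" "[]" "cls (HId A)"] by (simp add: apx ap_id_base)
    qed (use A wt in auto)
    have z2: "heq G (HComp (HTens (HId (hdual A)) (hlam G A)) (HTens (hLam G A) (HId (hdual A)))) (HId (hdual A))"
    proof (rule ap_final)
      show "ap [] (HComp (HTens (HId (hdual A)) (hlam G A)) (HTens (hLam G A) (HId (hdual A)))) [] (cls (HId (hdual A))) = cls (HId (hdual A))"
        using A wt L[THEN conjunct2, rule_format, of "[]" "[]" "cls (HId (rev A))"] by (simp add: apx ap_id_base hdual_def)
    qed (use A wt in \<open>auto simp: hdual_def\<close>)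
    show "is_right_dual G A (hdual A) (hLam G A) (hlam G A)"
      unfolding is_right_dual_def using wt z1 z2 by (simp add: hdual_def)
  qed
qed


theorem lemma5p6:
  fixes G :: "('o, 'g) groupoid"
  assumes "is_groupoid G"
  shows "(\<forall>g\<in>gMor G. is_right_dual G [g] [g] (hLam_gen g) (hlam_gen G g)) \<and>
         (\<forall>A. set A \<subseteq> gMor G \<longrightarrow> is_right_dual G A (hdual A) (hLam G A) (hlam G A))"
  by (rule main[OF assms])

end
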